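(* Let $f,g:[0,\infty)\times\Omega\times\mathbb{R}\times\mathbb{R}\to\mathbb{R}$ satisfy (H1), (H2), (H3). Then for each $\varepsilon>0$ there exist bounded functions (processes) $a^{\varepsilon}_s(y,y',z)$, $b^{\varepsilon}_s(z,z',y')$, $c^{\varepsilon}_s(y,y',z)$, $d^{\varepsilon}_s(z,z',y')$ such that for all $s,y,y',z,z'$: \[ a^{\varepsilon}_s(y,y',z)+2G\big(c^{\varepsilon}_s(y,y',z)\big)\le-\mu, \] \[ \big|f(s,y,z)-f(s,y',z')-a^{\varepsilon}_s(y,y',z)(y-y')-b^{\varepsilon}_s(z,z',y')(z-z')\big|\le 4L_1\varepsilon, \] \[ \big|g(s,y,z)-g(s,y',z')-c^{\varepsilon}_s(y,y',z)(y-y')-d^{\varepsilon}_s(z,z',y')(z-z')\big|\le 4L_1\varepsilon. \] Moreover, for each $T>0$ and all $Y,Y',Z,Z'\in M^2_G(0,T)$, the processes $a^{\varepsilon}_s(Y_s,Y'_s,Z_s)$, $b^{\varepsilon}_s(Z_s,Z'_s,Y'_s)$, $c^{\varepsilon}_s(Y_s,Y'_s,Z_s)$, $d^{\varepsilon}_s(Z_s,Z'_s,Y'_s)$ belong to $M^2_G(0,T)$.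
   Context: Setting (one-dimensional $G$-Brownian motion): $\Omega=C_0([0,\infty);\mathbb{R})$ with canonical process $B$; $\hat{\mathbb{E}}$ is the $G$-expectation on $\Omega$ under which $B$ is a $G$-Brownian motion with $\bar\sigma^2=\hat{\mathbb{E}}[B_1^2]\ge-\hat{\mathbb{E}}[-B_1^2]=\underline\sigma^2>0$, so $G(a)=\frac12\hat{\mathbb{E}}[aB_1^2]=\frac12(\bar\sigma^2a^+-\underline\sigma^2a^-)$ for $a\in\mathbb{R}$; $\hat{\mathbb{E}}_t$ is the conditional $G$-expectation and $\langle B\rangle$ the quadratic variation of $B$. $L^p_G(\Omega_T)$ is the completion of cylinder functions $\varphi(B_{t_1},\dots,B_{t_k})$ ($\varphi$ bounded Lipschitz, $t_i\le T$) under $(\hat{\mathbb{E}}|\cdot|^p)^{1/p}$; $M^p_G(0,T)$ is the completion of simple processes $\sum_j\xi_j\mathbf 1_{[t_j,t_{j+1})}(t)$, $\xi_j\in L_{ip}(\Omega_{t_j})$, under $(\hat{\mathbb{E}}\int_0^T|\eta_s|^pds)^{1/p}$. Hypotheses on $f(t,\omega,y,z),g(t,\omega,y,z)$: (H1) there is $\beta>0$ with $f(\cdot,\cdot,y,z),g(\cdot,\cdot,y,z)\in M^{2+\beta}_G(0,n)$ for all $y,z$ and all $n>0$; (H2) $|f(t,y,z)-f(t,y',z')|+|g(t,y,z)-g(t,y',z')|\le L_1(|y-y'|+|z-z'|)$; (H3) there is $\mu>0$ with $(f(t,y,z)-f(t,y',z))(y-y')+2G\big((g(t,y,z)-g(t,y',z))(y-y')\big)\le-\mu|y-y'|^2$.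 *)

theory Defs
  imports "HOL-Probability.Probability"
begin

typedef path = "{w :: real \<Rightarrow> real. continuous_on {0..} w \<and> w 0 = 0 \<and> (\<forall>t<0. w t = 0)}"
  by (rule exI[of _ "\<lambda>_. 0"]) auto

definition Bp :: "real \<Rightarrow> path \<Rightarrow> real" where
  "Bp t w = Rep_path w t"

definition PathM :: "path measure" where
  "PathM = sigma UNIV {{w. Bp t w \<in> A} | t A. A \<in> sets borel}"

definition Filt :: "real \<Rightarrow> path measure" where
  "Filt t = sigma UNIV {{w. Bp s w \<in> A} | s A. 0 \<le> s \<and> s \<le> t \<and> A \<in> sets borel}"

definition Gfun :: "real \<Rightarrow> real \<Rightarrow> real \<Rightarrow> real" where
  "Gfun sl su a = (su\<^sup>2 * max a 0 - sl\<^sup>2 * max (- a) 0) / 2"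

section \<open>G-expectation via its representing family of probability measures\<close>

text \<open>Laws on path space under which B is a martingale with
  d<B>_t/dt in [sl^2, su^2], i.e. B martingale, B^2 - sl^2 t submartingale,
  B^2 - su^2 t supermartingale.\<close>
definition Pset :: "real \<Rightarrow> real \<Rightarrow> path measure set" where
  "Pset sl su = {P. prob_space P \<and> sets P = sets PathM \<and>
     (\<forall>t\<ge>0. integrable P (\<lambda>w. (Bp t w)\<^sup>2)) \<and>
     (\<forall>s t A. 0 \<le> s \<longrightarrow> s \<le> t \<longrightarrow> A \<in> sets (Filt s) \<longrightarrow>
        set_lebesgue_integral P A (Bp t) = set_lebesgue_integral P A (Bp s) \<and>
        set_lebesgue_integral P A (\<lambda>w. (Bp s w)\<^sup>2 - sl\<^sup>2 * s)
          \<le> set_lebesgue_integral P A (\<lambda>w. (Bp t w)\<^sup>2 - sl\<^sup>2 * t) \<and>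
        set_lebesgue_integral P A (\<lambda>w. (Bp t w)\<^sup>2 - su\<^sup>2 * t)
          \<le> set_lebesgue_integral P A (\<lambda>w. (Bp s w)\<^sup>2 - su\<^sup>2 * s))}"

text \<open>The M^p_G(0,T) seminorm to the p: upper expectation of int_0^T |eta_s|^p ds
  (outer integral, so that it is defined for arbitrary processes).\<close>
definition normM :: "real \<Rightarrow> real \<Rightarrow> real \<Rightarrow> real \<Rightarrow> (real \<Rightarrow> path \<Rightarrow> real) \<Rightarrow> ennreal" where
  "normM sl su p T eta = (SUP P\<in>Pset sl su.
     (INF h\<in>{h \<in> borel_measurable (lborel \<Otimes>\<^sub>M P).
              \<forall>x. ennreal (indicator {0..T} (fst x) * \<bar>eta (fst x) (snd x)\<bar> powr p) \<le> h x}.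
        \<integral>\<^sup>+ x. h x \<partial>(lborel \<Otimes>\<^sub>M P)))"

definition Lip_cyl :: "real \<Rightarrow> (path \<Rightarrow> real) set" where
  "Lip_cyl t = {xi. \<exists>(k::nat) (s::nat \<Rightarrow> real) (phi::(nat \<Rightarrow> real) \<Rightarrow> real) C L.
      (\<forall>i<k. 0 \<le> s i \<and> s i \<le> t) \<and> (\<forall>x. \<bar>phi x\<bar> \<le> C) \<and>
      (\<forall>x y. \<bar>phi x - phi y\<bar> \<le> L * (\<Sum>i<k. \<bar>x i - y i\<bar>)) \<and>
      xi = (\<lambda>w. phi (\<lambda>i. Bp (s i) w))}"

definition simple_proc :: "real \<Rightarrow> (real \<Rightarrow> path \<Rightarrow> real) \<Rightarrow> bool" where
  "simple_proc T eta \<longleftrightarrow> (\<exists>(N::nat) (tt::nat \<Rightarrow> real) (xi::nat \<Rightarrow> path \<Rightarrow> real).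
      tt 0 = 0 \<and> tt N = T \<and> (\<forall>j<N. tt j < tt (Suc j)) \<and> (\<forall>j<N. xi j \<in> Lip_cyl (tt j)) \<and>
      eta = (\<lambda>t w. \<Sum>j<N. xi j w * indicator {tt j..<tt (Suc j)} t))"

definition MG :: "real \<Rightarrow> real \<Rightarrow> real \<Rightarrow> real \<Rightarrow> (real \<Rightarrow> path \<Rightarrow> real) set" where
  "MG sl su p T = {eta. \<exists>u. (\<forall>n::nat. simple_proc T (u n)) \<and>
      (\<lambda>n. normM sl su p T (\<lambda>t w. eta t w - u n t w)) \<longlonglongrightarrow> 0}"

end

theory Submission
  imports Defs
begin


lemma ennreal_inf_aux:
  fixes x R :: ennreal and A :: "ennreal set"
  assumes ne: "A \<noteq> {}" and le: "\<And>a. a \<in> A \<Longrightarrow> x \<le> ennreal c * a + R" and c: "0 \<le> c"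
  shows "x \<le> ennreal c * Inf A + R"
proof (cases "c = 0")
  case True
  from ne obtain a where "a \<in> A" by auto
  with le[OF this] True show ?thesis by simp
next
  case False
  hence cpos: "0 < c" using c by simp
  show ?thesis
  proof (cases "Inf A = \<top>")
    case True
    show ?thesis using cpos by (subst True) (simp add: ennreal_mult_top)
  next
    case nt: False
    show ?thesis
    proof (rule ennreal_le_epsilon)
      fix e :: real assume e: "0 < e"
      have "\<exists>a\<in>A. id a < Inf A + ennreal (e / c)"
        by (rule INF_approx_ennreal[where e="e/c" and x="Inf A" and A=A and f=id]) (use e cpos nt in auto)
      then obtain a where a: "a \<in> A" "a < Inf A + ennreal (e / c)" by auto
      have "x \<le> ennreal c * a + R" using le[OF a(1)] .
      also have "\<dots> \<le> ennreal c * (Inf A + ennreal (e / c)) + R"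
        using a(2) by (intro add_mono mult_left_mono) auto
      also have "\<dots> = ennreal c * Inf A + R + ennreal e"
        using cpos e by (simp add: distrib_left ennreal_mult[symmetric] ac_simps)
      finally show "x \<le> ennreal c * Inf A + R + ennreal e" .
    qed
  qed
qed

lemma space_PathM: "space PathM = UNIV"
  unfolding PathM_def by (rule space_measure_of) auto

lemma Pset_D:
  assumes "P \<in> Pset sl su"
  shows "prob_space P" "sets P = sets PathM" "space P = UNIV"
  using assms unfolding Pset_def by (auto dest: sets_eq_imp_space_eq simp: space_PathM)

lemma abs_powr2: "\<bar>x::real\<bar> powr 2 = x\<^sup>2"
  by (cases "x = 0") (auto simp: powr_numeral)

lemma normM_le:
  assumes pt: "\<And>t w. 0 \<le> t \<Longrightarrow> t < T \<Longrightarrow>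
      \<bar>\<eta> t w\<bar> powr p \<le> c1 * \<bar>\<theta>1 t w\<bar> powr p1 + c2 * \<bar>\<theta>2 t w\<bar> powr p2 + c3"
    and c1: "0 \<le> c1" and c2: "0 \<le> c2" and c3: "0 \<le> c3"
    and T: "0 \<le> T" "T \<le> T1" "T \<le> T2"
  shows "normM sl su p T \<eta> \<le> ennreal c1 * normM sl su p1 T1 \<theta>1
           + ennreal c2 * normM sl su p2 T2 \<theta>2 + ennreal (c3 * T)"
  unfolding normM_def[of sl su p T \<eta>]
proof (rule SUP_least)
  fix P assume P: "P \<in> Pset sl su"
  note PD = Pset_D[OF P]
  interpret prob_space P by (rule PD(1))
  let ?M = "lborel \<Otimes>\<^sub>M P"
  define S where "S = (\<lambda>p (T::real) (\<eta>::real \<Rightarrow> path \<Rightarrow> real). {h \<in> borel_measurable ?M.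
              \<forall>x. ennreal (indicator {0..T} (fst x) * \<bar>\<eta> (fst x) (snd x)\<bar> powr p) \<le> h x})"
  have neS: "(\<lambda>_. \<top>) \<in> S p T \<eta>" for p T \<eta> unfolding S_def by auto
  have UP: "UNIV \<in> sets P" using PD(3) sets.top[of P] by simp
  have A1: "{0..T} \<times> UNIV \<in> sets ?M" by (rule pair_measureI) (use UP in auto)
  have A2: "{T} \<times> UNIV \<in> sets ?M" by (rule pair_measureI) (use UP in auto)
  have e1: "emeasure ?M ({0..T} \<times> UNIV) = ennreal T"
    using UP T by (simp add: emeasure_pair_measure_Times emeasure_space_1[unfolded PD(3)])
  have e2: "emeasure ?M ({T} \<times> UNIV) = 0"
    using UP by (simp add: emeasure_pair_measure_Times)
  have key: "(INF h\<in>S p T \<eta>. \<integral>\<^sup>+ x. h x \<partial>?M) \<le> ennreal c1 * (\<integral>\<^sup>+ x. h1 x \<partial>?M)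
        + (ennreal c2 * (\<integral>\<^sup>+ x. h2 x \<partial>?M) + ennreal (c3 * T))"
    if h1: "h1 \<in> S p1 T1 \<theta>1" and h2: "h2 \<in> S p2 T2 \<theta>2" for h1 h2
  proof -
    define H where "H = (\<lambda>x. ennreal c1 * h1 x + ennreal c2 * h2 x
        + ennreal c3 * indicator ({0..T} \<times> UNIV) x + \<top> * indicator ({T} \<times> UNIV) x)"
    have m1: "h1 \<in> borel_measurable ?M" and m2: "h2 \<in> borel_measurable ?M"
      using h1 h2 unfolding S_def by auto
    have HS: "H \<in> S p T \<eta>"
      unfolding S_def
    proof (intro CollectI conjI allI)
      show "H \<in> borel_measurable ?M" unfolding H_def using m1 m2 A1 A2 by measurable
      fix x :: "real \<times> path"
      obtain t w where x: "x = (t, w)" by (cases x)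
      show "ennreal (indicator {0..T} (fst x) * \<bar>\<eta> (fst x) (snd x)\<bar> powr p) \<le> H x"
      proof (cases "0 \<le> t \<and> t < T")
        case True
        have i1: "ennreal (\<bar>\<theta>1 t w\<bar> powr p1) \<le> h1 x"
          proof -
          have "ennreal (indicator {0..T1} t * \<bar>\<theta>1 t w\<bar> powr p1) \<le> h1 (t, w)"
            using h1 unfolding S_def by force
          then show ?thesis using True T unfolding x by simp
        qed
        have i2: "ennreal (\<bar>\<theta>2 t w\<bar> powr p2) \<le> h2 x"
          proof -
          have "ennreal (indicator {0..T2} t * \<bar>\<theta>2 t w\<bar> powr p2) \<le> h2 (t, w)"
            using h2 unfolding S_def by force
          then show ?thesis using True T unfolding x by simp
        qed
        have "ennreal (indicator {0..T} (fst x) * \<bar>\<eta> (fst x) (snd x)\<bar> powr p)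
             = ennreal (\<bar>\<eta> t w\<bar> powr p)" using True x by simp
        also have "\<dots> \<le> ennreal (c1 * \<bar>\<theta>1 t w\<bar> powr p1 + c2 * \<bar>\<theta>2 t w\<bar> powr p2 + c3)"
          using pt True by (intro ennreal_leI) auto
        also have "\<dots> = ennreal c1 * ennreal (\<bar>\<theta>1 t w\<bar> powr p1) + ennreal c2 * ennreal (\<bar>\<theta>2 t w\<bar> powr p2) + ennreal c3"
          using c1 c2 c3 by (simp add: ennreal_plus ennreal_mult)
        also have "\<dots> \<le> ennreal c1 * h1 x + ennreal c2 * h2 x + ennreal c3 * indicator ({0..T} \<times> UNIV) x"
          using True x i1 i2 by (intro add_mono mult_left_mono) auto
        also have "\<dots> \<le> H x" unfolding H_def by simp
        finally show ?thesis .
      next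
        case False
        then show ?thesis
        proof (cases "t = T")
          case True
          then show ?thesis unfolding H_def x by simp
        next
          case False
          with \<open>\<not> (0 \<le> t \<and> t < T)\<close> have "t \<notin> {0..T}" by auto
          then show ?thesis unfolding x by simp
        qed
      qed
    qed
    have "(INF h\<in>S p T \<eta>. \<integral>\<^sup>+ x. h x \<partial>?M) \<le> (\<integral>\<^sup>+ x. H x \<partial>?M)"
      by (rule INF_lower) (rule HS)
    also have "\<dots> = ennreal c1 * (\<integral>\<^sup>+ x. h1 x \<partial>?M) + ennreal c2 * (\<integral>\<^sup>+ x. h2 x \<partial>?M)
        + ennreal c3 * emeasure ?M ({0..T} \<times> UNIV) + \<top> * emeasure ?M ({T} \<times> UNIV)"
      unfolding H_def using m1 m2 A1 A2
      by (simp add: nn_integral_add nn_integral_cmult nn_integral_cmult_indicator)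
    also have "\<dots> = ennreal c1 * (\<integral>\<^sup>+ x. h1 x \<partial>?M)
        + (ennreal c2 * (\<integral>\<^sup>+ x. h2 x \<partial>?M) + ennreal (c3 * T))"
      using e1 e2 c3 T by (simp add: ennreal_mult ac_simps)
    finally show ?thesis .
  qed
  have step2: "(INF h\<in>S p T \<eta>. \<integral>\<^sup>+ x. h x \<partial>?M) \<le> ennreal c1 * (INF h\<in>S p1 T1 \<theta>1. \<integral>\<^sup>+ x. h x \<partial>?M)
        + (ennreal c2 * (INF h\<in>S p2 T2 \<theta>2. \<integral>\<^sup>+ x. h x \<partial>?M) + ennreal (c3 * T))"
  proof (rule ennreal_inf_aux[OF _ _ c1])
    show "(\<lambda>h. \<integral>\<^sup>+ x. h x \<partial>?M) ` S p1 T1 \<theta>1 \<noteq> {}" using neS by auto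
    fix a assume "a \<in> (\<lambda>h. \<integral>\<^sup>+ x. h x \<partial>?M) ` S p1 T1 \<theta>1"
    then obtain h1 where h1: "h1 \<in> S p1 T1 \<theta>1" "a = (\<integral>\<^sup>+ x. h1 x \<partial>?M)" by auto
    have "(INF h\<in>S p T \<eta>. \<integral>\<^sup>+ x. h x \<partial>?M) \<le> ennreal c2 * (INF h\<in>S p2 T2 \<theta>2. \<integral>\<^sup>+ x. h x \<partial>?M)
          + (ennreal c1 * a + ennreal (c3 * T))"
    proof (rule ennreal_inf_aux[OF _ _ c2])
      show "(\<lambda>h. \<integral>\<^sup>+ x. h x \<partial>?M) ` S p2 T2 \<theta>2 \<noteq> {}" using neS by auto
      fix b assume "b \<in> (\<lambda>h. \<integral>\<^sup>+ x. h x \<partial>?M) ` S p2 T2 \<theta>2"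
      then obtain h2 where h2: "h2 \<in> S p2 T2 \<theta>2" "b = (\<integral>\<^sup>+ x. h2 x \<partial>?M)" by auto
      show "(INF h\<in>S p T \<eta>. \<integral>\<^sup>+ x. h x \<partial>?M) \<le> ennreal c2 * b + (ennreal c1 * a + ennreal (c3 * T))"
        using key[OF h1(1) h2(1)] h1(2) h2(2) by (simp add: ac_simps)
    qed
    then show "(INF h\<in>S p T \<eta>. \<integral>\<^sup>+ x. h x \<partial>?M) \<le> ennreal c1 * a
        + (ennreal c2 * (INF h\<in>S p2 T2 \<theta>2. \<integral>\<^sup>+ x. h x \<partial>?M) + ennreal (c3 * T))"
      by (simp add: ac_simps)
  qed
  have su1: "(INF h\<in>S p1 T1 \<theta>1. \<integral>\<^sup>+ x. h x \<partial>?M) \<le> normM sl su p1 T1 \<theta>1"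
    unfolding S_def normM_def by (rule SUP_upper[OF P, of "\<lambda>P. INF h\<in>{h \<in> borel_measurable (lborel \<Otimes>\<^sub>M P).
              \<forall>x. ennreal (indicator {0..T1} (fst x) * \<bar>\<theta>1 (fst x) (snd x)\<bar> powr p1) \<le> h x}.
        \<integral>\<^sup>+ x. h x \<partial>(lborel \<Otimes>\<^sub>M P)"])
  have su2: "(INF h\<in>S p2 T2 \<theta>2. \<integral>\<^sup>+ x. h x \<partial>?M) \<le> normM sl su p2 T2 \<theta>2"
    unfolding S_def normM_def by (rule SUP_upper[OF P, of "\<lambda>P. INF h\<in>{h \<in> borel_measurable (lborel \<Otimes>\<^sub>M P).
              \<forall>x. ennreal (indicator {0..T2} (fst x) * \<bar>\<theta>2 (fst x) (snd x)\<bar> powr p2) \<le> h x}.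
        \<integral>\<^sup>+ x. h x \<partial>(lborel \<Otimes>\<^sub>M P)"])
  have "(INF h\<in>S p T \<eta>. \<integral>\<^sup>+ x. h x \<partial>?M) \<le> ennreal c1 * normM sl su p1 T1 \<theta>1
           + ennreal c2 * normM sl su p2 T2 \<theta>2 + ennreal (c3 * T)"
  proof -
    have "ennreal c1 * (INF h\<in>S p1 T1 \<theta>1. \<integral>\<^sup>+ x. h x \<partial>?M) \<le> ennreal c1 * normM sl su p1 T1 \<theta>1"
      using su1 by (rule mult_left_mono) simp
    moreover have "ennreal c2 * (INF h\<in>S p2 T2 \<theta>2. \<integral>\<^sup>+ x. h x \<partial>?M) \<le> ennreal c2 * normM sl su p2 T2 \<theta>2"
      using su2 by (rule mult_left_mono) simp
    ultimately show ?thesis using step2 by (smt (verit) add_mono add.assoc order_trans order_refl)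
  qed
  then show "(INF h\<in>{h \<in> borel_measurable (lborel \<Otimes>\<^sub>M P).
              \<forall>x. ennreal (indicator {0..T} (fst x) * \<bar>\<eta> (fst x) (snd x)\<bar> powr p) \<le> h x}.
        \<integral>\<^sup>+ x. h x \<partial>(lborel \<Otimes>\<^sub>M P)) \<le> ennreal c1 * normM sl su p1 T1 \<theta>1
           + ennreal c2 * normM sl su p2 T2 \<theta>2 + ennreal (c3 * T)"
    unfolding S_def .
qed



lemma sum_split_add: "(\<Sum>i<k1+k2. f i) = (\<Sum>i<k1. f i) + (\<Sum>i<k2. f (i + k1)) " for f :: "nat \<Rightarrow> real"
  by (induction k2) (auto simp: ac_simps)

lemma Lip_cyl_mono: "t \<le> t' \<Longrightarrow> Lip_cyl t \<subseteq> Lip_cyl t'"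
proof
  fix \<xi> assume tt: "t \<le> t'" and "\<xi> \<in> Lip_cyl t"
  then obtain k :: nat and s :: "nat \<Rightarrow> real" and phi :: "(nat \<Rightarrow> real) \<Rightarrow> real" and C L :: real where A: "\<forall>i<k. 0 \<le> s i \<and> s i \<le> t" "\<forall>x. \<bar>phi x\<bar> \<le> C"
    "\<forall>x y. \<bar>phi x - phi y\<bar> \<le> L * (\<Sum>i<k. \<bar>x i - y i\<bar>)" "\<xi> = (\<lambda>w. phi (\<lambda>i. Bp (s i) w))"
    unfolding Lip_cyl_def mem_Collect_eq by blast
  have "\<forall>i<k. 0 \<le> s i \<and> s i \<le> t'" using A(1) tt by force
  then show "\<xi> \<in> Lip_cyl t'" unfolding Lip_cyl_def using A(2-4) by blast
qed

lemma Lip_cyl_bounded: "\<xi> \<in> Lip_cyl t \<Longrightarrow> \<exists>C. \<forall>w. \<bar>\<xi> w\<bar> \<le> C"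
  unfolding Lip_cyl_def by auto

lemma Lip_cyl_const: "(\<lambda>w. c) \<in> Lip_cyl t"
  unfolding Lip_cyl_def
  apply (rule CollectI, rule exI[of _ 0], rule exI[of _ "\<lambda>_. 0"], rule exI[of _ "\<lambda>_. c"],
      rule exI[of _ "\<bar>c\<bar>"], rule exI[of _ 0])
  by simp

definition LLip :: "(real \<Rightarrow> real \<Rightarrow> real) \<Rightarrow> bool" where
  "LLip \<Phi> \<longleftrightarrow> (\<forall>B. \<exists>K. \<forall>a b a' b'. \<bar>a\<bar> \<le> B \<longrightarrow> \<bar>b\<bar> \<le> B \<longrightarrow> \<bar>a'\<bar> \<le> B \<longrightarrow> \<bar>b'\<bar> \<le> B \<longrightarrow>
      \<bar>\<Phi> a b - \<Phi> a' b'\<bar> \<le> K * (\<bar>a - a'\<bar> + \<bar>b - b'\<bar>))"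

lemma Lip_cyl_local:
  fixes phi :: "(nat \<Rightarrow> real) \<Rightarrow> real" and x y :: "nat \<Rightarrow> real"
  assumes "\<forall>x y. \<bar>phi x - phi y\<bar> \<le> L * (\<Sum>i<k. \<bar>x i - y i\<bar>)" "\<forall>i<k. x i = y i"
  shows "phi x = phi y"
proof -
  have "(\<Sum>i<k. \<bar>x i - y i\<bar>) = 0" using assms(2) by (intro sum.neutral) auto
  then show ?thesis using assms(1)[rule_format, of x y] by simp
qed

lemma Lip_cyl_comp2:
  assumes \<Phi>: "LLip \<Phi>" and x1: "\<xi>1 \<in> Lip_cyl t" and x2: "\<xi>2 \<in> Lip_cyl t"
  shows "(\<lambda>w. \<Phi> (\<xi>1 w) (\<xi>2 w)) \<in> Lip_cyl t"
proof -
  obtain k1 :: nat and s1 :: "nat \<Rightarrow> real" and phi1 :: "(nat \<Rightarrow> real) \<Rightarrow> real" and C1 L1 :: real where A1: "\<forall>i<k1. 0 \<le> s1 i \<and> s1 i \<le> t" "\<forall>x. \<bar>phi1 x\<bar> \<le> C1"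
    "\<forall>x y. \<bar>phi1 x - phi1 y\<bar> \<le> L1 * (\<Sum>i<k1. \<bar>x i - y i\<bar>)" "\<xi>1 = (\<lambda>w. phi1 (\<lambda>i. Bp (s1 i) w))"
    using x1 unfolding Lip_cyl_def mem_Collect_eq by blast
  obtain k2 :: nat and s2 :: "nat \<Rightarrow> real" and phi2 :: "(nat \<Rightarrow> real) \<Rightarrow> real" and C2 L2 :: real where A2: "\<forall>i<k2. 0 \<le> s2 i \<and> s2 i \<le> t" "\<forall>x. \<bar>phi2 x\<bar> \<le> C2"
    "\<forall>x y. \<bar>phi2 x - phi2 y\<bar> \<le> L2 * (\<Sum>i<k2. \<bar>x i - y i\<bar>)" "\<xi>2 = (\<lambda>w. phi2 (\<lambda>i. Bp (s2 i) w))"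
    using x2 unfolding Lip_cyl_def mem_Collect_eq by blast
  define B where "B = max C1 C2"
  have "0 \<le> C1" using A1(2)[rule_format, of undefined] abs_ge_zero[of "phi1 undefined"] by linarith
  then have B0: "0 \<le> B" unfolding B_def by (simp add: le_max_iff_disj)
  from \<Phi>[unfolded LLip_def, THEN spec[of _ B]] obtain K where K0: "\<forall>a b a' b'. \<bar>a\<bar> \<le> B \<longrightarrow> \<bar>b\<bar> \<le> B \<longrightarrow> \<bar>a'\<bar> \<le> B \<longrightarrow> \<bar>b'\<bar> \<le> B \<longrightarrow>
      \<bar>\<Phi> a b - \<Phi> a' b'\<bar> \<le> K * (\<bar>a - a'\<bar> + \<bar>b - b'\<bar>)" by (elim exE)
  note K = K0[rule_format]
  define K' where "K' = max K 0"
  have K': "\<And>a b a' b'. \<bar>a\<bar> \<le> B \<Longrightarrow> \<bar>b\<bar> \<le> B \<Longrightarrow> \<bar>a'\<bar> \<le> B \<Longrightarrow> \<bar>b'\<bar> \<le> B \<Longrightarrow>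
      \<bar>\<Phi> a b - \<Phi> a' b'\<bar> \<le> K' * (\<bar>a - a'\<bar> + \<bar>b - b'\<bar>)"
  proof -
    fix a b a' b' :: real assume "\<bar>a\<bar> \<le> B" "\<bar>b\<bar> \<le> B" "\<bar>a'\<bar> \<le> B" "\<bar>b'\<bar> \<le> B"
    from K[OF this] have "\<bar>\<Phi> a b - \<Phi> a' b'\<bar> \<le> K * (\<bar>a - a'\<bar> + \<bar>b - b'\<bar>)" .
    also have "\<dots> \<le> K' * (\<bar>a - a'\<bar> + \<bar>b - b'\<bar>)" unfolding K'_def by (intro mult_right_mono) auto
    finally show "\<bar>\<Phi> a b - \<Phi> a' b'\<bar> \<le> K' * (\<bar>a - a'\<bar> + \<bar>b - b'\<bar>)" .
  qed
  have K'0: "0 \<le> K'" unfolding K'_def by simp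
  define M where "M = max (max L1 L2) 0"
  have M0: "0 \<le> M" unfolding M_def by simp
  define s where "s = (\<lambda>i. if i < k1 then s1 i else s2 (i - k1))"
  define phi where "phi = (\<lambda>x. \<Phi> (phi1 x) (phi2 (\<lambda>i. x (i + k1))))"
  have b1: "\<bar>phi1 x\<bar> \<le> B" for x using A1(2)[rule_format, of x] unfolding B_def by (simp add: le_max_iff_disj)
  have b2: "\<bar>phi2 x\<bar> \<le> B" for x using A2(2)[rule_format, of x] unfolding B_def by (simp add: le_max_iff_disj)
  show ?thesis
    unfolding Lip_cyl_def
  proof (intro CollectI exI conjI)
    show "\<forall>i<k1+k2. 0 \<le> s i \<and> s i \<le> t" using A1(1) A2(1) unfolding s_def by auto
    show "\<forall>x. \<bar>phi x\<bar> \<le> \<bar>\<Phi> 0 0\<bar> + K' * (B + B)"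
    proof
      fix x
      have "\<bar>phi x - \<Phi> 0 0\<bar> \<le> K' * (\<bar>phi1 x - 0\<bar> + \<bar>phi2 (\<lambda>i. x (i + k1)) - 0\<bar>)"
        unfolding phi_def by (rule K') (use b1 b2 B0 in auto)
      also have "\<dots> \<le> K' * (B + B)" using b1[of x] b2[of "\<lambda>i. x (i + k1)"] K'0 by (intro mult_left_mono) auto
      finally show "\<bar>phi x\<bar> \<le> \<bar>\<Phi> 0 0\<bar> + K' * (B + B)" by linarith
    qed
    show "\<forall>x y. \<bar>phi x - phi y\<bar> \<le> (K' * M) * (\<Sum>i<k1+k2. \<bar>x i - y i\<bar>)"
    proof (intro allI)
      fix x y :: "nat \<Rightarrow> real"
      have "\<bar>phi x - phi y\<bar> \<le> K' * (\<bar>phi1 x - phi1 y\<bar> + \<bar>phi2 (\<lambda>i. x (i + k1)) - phi2 (\<lambda>i. y (i + k1))\<bar>)"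
        unfolding phi_def by (rule K') (use b1 b2 in auto)
      also have "\<dots> \<le> K' * (M * (\<Sum>i<k1. \<bar>x i - y i\<bar>) + M * (\<Sum>i<k2. \<bar>x (i + k1) - y (i + k1)\<bar>))"
      proof (intro mult_left_mono add_mono K'0)
        have "\<bar>phi1 x - phi1 y\<bar> \<le> L1 * (\<Sum>i<k1. \<bar>x i - y i\<bar>)" using A1(3) by blast
        also have "\<dots> \<le> M * (\<Sum>i<k1. \<bar>x i - y i\<bar>)" unfolding M_def
          by (intro mult_right_mono) (auto intro: sum_nonneg)
        finally show "\<bar>phi1 x - phi1 y\<bar> \<le> M * (\<Sum>i<k1. \<bar>x i - y i\<bar>)" .
        have "\<bar>phi2 (\<lambda>i. x (i + k1)) - phi2 (\<lambda>i. y (i + k1))\<bar> \<le> L2 * (\<Sum>i<k2. \<bar>x (i + k1) - y (i + k1)\<bar>)"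
          using A2(3) by blast
        also have "\<dots> \<le> M * (\<Sum>i<k2. \<bar>x (i + k1) - y (i + k1)\<bar>)" unfolding M_def
          by (intro mult_right_mono) (auto intro: sum_nonneg)
        finally show "\<bar>phi2 (\<lambda>i. x (i + k1)) - phi2 (\<lambda>i. y (i + k1))\<bar> \<le> M * (\<Sum>i<k2. \<bar>x (i + k1) - y (i + k1)\<bar>)" .
      qed
      also have "\<dots> = (K' * M) * (\<Sum>i<k1+k2. \<bar>x i - y i\<bar>)"
        by (simp add: sum_split_add[of "\<lambda>i. \<bar>x i - y i\<bar>" k1 k2] algebra_simps)
      finally show "\<bar>phi x - phi y\<bar> \<le> (K' * M) * (\<Sum>i<k1+k2. \<bar>x i - y i\<bar>)" .
    qed
    show "(\<lambda>w. \<Phi> (\<xi>1 w) (\<xi>2 w)) = (\<lambda>w. phi (\<lambda>i. Bp (s i) w))"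
    proof
      fix w
      have e1: "phi1 (\<lambda>i. Bp (s1 i) w) = phi1 (\<lambda>i. Bp (s i) w)"
        by (rule Lip_cyl_local[OF A1(3)]) (simp add: s_def)
      have e2: "(\<lambda>i. Bp (s (i + k1)) w) = (\<lambda>i. Bp (s2 i) w)" by (simp add: s_def)
      show "\<Phi> (\<xi>1 w) (\<xi>2 w) = phi (\<lambda>i. Bp (s i) w)"
        unfolding phi_def A1(4) A2(4) using e1 e2 by simp
    qed
  qed
qed



definition stepT :: "real \<Rightarrow> (real \<Rightarrow> path \<Rightarrow> real) \<Rightarrow> bool" where
  "stepT T \<eta> \<longleftrightarrow> (\<exists>P. finite P \<and> 0 \<in> P \<and> T \<in> P \<and> P \<subseteq> {0..T} \<and>
     (\<forall>t w. \<not> (0 \<le> t \<and> t < T) \<longrightarrow> \<eta> t w = 0) \<and>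
     (\<forall>t. 0 \<le> t \<and> t < T \<longrightarrow> \<eta> t \<in> Lip_cyl t) \<and>
     (\<forall>t t'. 0 \<le> t \<longrightarrow> t \<le> t' \<longrightarrow> t' < T \<longrightarrow> (\<forall>p\<in>P. \<not> (t < p \<and> p \<le> t')) \<longrightarrow> \<eta> t = \<eta> t'))"

lemma tt_less:
  fixes tt :: "nat \<Rightarrow> real"
  assumes "\<forall>j<N. tt j < tt (Suc j)" "i < j" "j \<le> N"
  shows "tt i < tt j"
  using assms(2,3)
proof (induction j)
  case 0 then show ?case by simp
next
  case (Suc j)
  have "tt j < tt (Suc j)" using assms(1) Suc.prems by auto
  then show ?case using Suc by (cases "i = j") auto
qed

lemma tt_le:
  fixes tt :: "nat \<Rightarrow> real"
  assumes "\<forall>j<N. tt j < tt (Suc j)" "i \<le> j" "j \<le> N"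
  shows "tt i \<le> tt j"
  using tt_less[OF assms(1), of i j] assms by (cases "i = j") auto

lemma tt_interval:
  fixes tt :: "nat \<Rightarrow> real"
  assumes "\<forall>j<N. tt j < tt (Suc j)" "tt 0 \<le> t" "t < tt N"
  shows "\<exists>j<N. tt j \<le> t \<and> t < tt (Suc j)"
  using assms
proof (induction N)
  case 0 then show ?case by simp
next
  case (Suc M)
  show ?case
  proof (cases "t < tt M")
    case True
    with Suc.IH Suc.prems obtain j where "j < M" "tt j \<le> t \<and> t < tt (Suc j)" by auto
    then show ?thesis by (intro exI[of _ j]) auto
  next
    case False
    then show ?thesis using Suc.prems by (intro exI[of _ M]) auto
  qed
qed

lemma tt_sum:
  fixes tt :: "nat \<Rightarrow> real" and x :: "nat \<Rightarrow> real"
  assumes mono: "\<forall>j<N. tt j < tt (Suc j)" and j: "j < N" "tt j \<le> t" "t < tt (Suc j)"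
  shows "(\<Sum>i<N. x i * indicator {tt i..<tt (Suc i)} t) = x j"
proof -
  have z: "x i * indicator {tt i..<tt (Suc i)} t = 0" if "i \<in> {..<N} - {j}" for i
  proof -
    have "t \<notin> {tt i..<tt (Suc i)}"
    proof (cases "i < j")
      case True
      then have "tt (Suc i) \<le> tt j" using tt_le[OF mono, of "Suc i" j] j by auto
      then show ?thesis using j by auto
    next
      case False
      then have "Suc j \<le> i" using that by auto
      then have "tt (Suc j) \<le> tt i" using tt_le[OF mono, of "Suc j" i] that by auto
      then show ?thesis using j by auto
    qed
    then show ?thesis by simp
  qed
  have e: "(\<Sum>i<N. x i * indicator {tt i..<tt (Suc i)} t) = x j * indicator {tt j..<tt (Suc j)} t
        + (\<Sum>i\<in>{..<N} - {j}. x i * indicator {tt i..<tt (Suc i)} t)"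
    using j by (subst sum.remove[of _ j]) auto
  have "(\<Sum>i\<in>{..<N} - {j}. x i * indicator {tt i..<tt (Suc i)} t) = 0"
    by (rule sum.neutral) (use z in blast)
  then show ?thesis using e j by simp
qed

lemma tt_sum_out:
  fixes tt :: "nat \<Rightarrow> real" and x :: "nat \<Rightarrow> real"
  assumes mono: "\<forall>j<N. tt j < tt (Suc j)" and t: "\<not> (tt 0 \<le> t \<and> t < tt N)"
  shows "(\<Sum>i<N. x i * indicator {tt i..<tt (Suc i)} t) = 0"
proof (intro sum.neutral ballI)
  fix i assume "i \<in> {..<N}"
  then have "tt 0 \<le> tt i" "tt (Suc i) \<le> tt N" using tt_le[OF mono, of 0 i] tt_le[OF mono, of "Suc i" N] by auto
  then have "t \<notin> {tt i..<tt (Suc i)}" using t by auto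
  then show "x i * indicator {tt i..<tt (Suc i)} t = 0" by simp
qed

lemma simple_to_step:
  assumes "simple_proc T \<eta>"
  shows "stepT T \<eta>"
proof -
  obtain N :: nat and tt :: "nat \<Rightarrow> real" and xi :: "nat \<Rightarrow> path \<Rightarrow> real" where
    A: "tt 0 = 0" "tt N = T" "\<forall>j<N. tt j < tt (Suc j)" "\<forall>j<N. xi j \<in> Lip_cyl (tt j)"
       "\<eta> = (\<lambda>t w. \<Sum>j<N. xi j w * indicator {tt j..<tt (Suc j)} t)"
    using assms unfolding simple_proc_def by blast
  note mono = A(3)
  have val: "\<eta> t = xi j" if "j < N" "tt j \<le> t" "t < tt (Suc j)" for t j
    unfolding A(5) using tt_sum[OF mono that] by auto
  show ?thesis
    unfolding stepT_def
  proof (intro exI[of _ "tt ` {..N}"] conjI allI impI)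
    show "finite (tt ` {..N})" by simp
    show "0 \<in> tt ` {..N}" using A(1) by force
    show "T \<in> tt ` {..N}" using A(2) by force
    show "tt ` {..N} \<subseteq> {0..T}" using tt_le[OF mono, of 0] tt_le[OF mono, of _ N] A(1,2) by auto
    fix t w assume "\<not> (0 \<le> t \<and> t < T)"
    then show "\<eta> t w = 0" unfolding A(5) using tt_sum_out[OF mono] A(1,2) by auto
  next
    fix t assume t: "0 \<le> t \<and> t < T"
    then obtain j where j: "j < N" "tt j \<le> t" "t < tt (Suc j)" using tt_interval[OF mono, of t] A(1,2) by auto
    show "\<eta> t \<in> Lip_cyl t" using val[OF j] A(4) j Lip_cyl_mono[of "tt j" t] by auto
  next
    fix t t' assume t: "0 \<le> t" "t \<le> t'" "t' < T" and np: "\<forall>p\<in>tt ` {..N}. \<not> (t < p \<and> p \<le> t')"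
    then obtain j where j: "j < N" "tt j \<le> t" "t < tt (Suc j)" using tt_interval[OF mono, of t] A(1,2) by auto
    have "t' < tt (Suc j)"
    proof (rule ccontr)
      assume "\<not> t' < tt (Suc j)"
      then have "t < tt (Suc j) \<and> tt (Suc j) \<le> t'" using j by auto
      moreover have "tt (Suc j) \<in> tt ` {..N}" using j by auto
      ultimately show False using np by blast
    qed
    then have "\<eta> t' = xi j" using val[of j t'] j t by auto
    then show "\<eta> t = \<eta> t'" using val[OF j] by simp
  qed
qed

lemma step_to_simple:
  assumes T: "0 < T" and st: "stepT T \<eta>"
  shows "simple_proc T \<eta>"
proof -
  obtain P where P: "finite P" "0 \<in> P" "T \<in> P" "P \<subseteq> {0..T}"
     "\<forall>t w. \<not> (0 \<le> t \<and> t < T) \<longrightarrow> \<eta> t w = 0"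
     "\<forall>t. 0 \<le> t \<and> t < T \<longrightarrow> \<eta> t \<in> Lip_cyl t"
     "\<forall>t t'. 0 \<le> t \<longrightarrow> t \<le> t' \<longrightarrow> t' < T \<longrightarrow> (\<forall>p\<in>P. \<not> (t < p \<and> p \<le> t')) \<longrightarrow> \<eta> t = \<eta> t'"
    using st unfolding stepT_def by blast
  define L where "L = sorted_list_of_set P"
  define n where "n = length L"
  define N where "N = n - 1"
  define tt where "tt = (\<lambda>j. L ! j)"
  have sL: "sorted_wrt (<) L" unfolding L_def by (simp add: strict_sorted_iff)
  have setL: "set L = P" unfolding L_def using P(1) by simp
  have nP: "n = card P" unfolding n_def L_def by simp
  have "card {0, T} \<le> card P" using P(1-3) by (intro card_mono) auto
  then have n2: "2 \<le> n" using T nP by simp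
  have Nn: "N < n" "Suc N = n" using n2 unfolding N_def by auto
  have lt: "tt i < tt j" if "i < j" "j < n" for i j
    unfolding tt_def using sorted_wrt_nth_less[OF sL that[unfolded n_def]] .
  have le: "tt i \<le> tt j" if "i \<le> j" "j < n" for i j
    using lt[of i j] that by (cases "i = j") auto
  have inP: "tt i \<in> P" if "i < n" for i using that setL unfolding tt_def n_def by auto
  have mono: "\<forall>j<N. tt j < tt (Suc j)" using lt Nn by auto
  have tt0: "tt 0 = 0"
  proof -
    obtain i where i: "i < n" "tt i = 0" using P(2) setL unfolding tt_def n_def by (metis in_set_conv_nth)
    have "tt 0 \<le> 0" using le[of 0 i] i by auto
    moreover have "tt 0 \<ge> 0" using inP[of 0] n2 P(4) by auto
    ultimately show ?thesis by simp
  qed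
  have ttN: "tt N = T"
  proof -
    obtain i where i: "i < n" "tt i = T" using P(3) setL unfolding tt_def n_def by (metis in_set_conv_nth)
    have "tt N \<ge> T" using le[of i N] i Nn by auto
    moreover have "tt N \<le> T" using inP[of N] Nn P(4) by auto
    ultimately show ?thesis by simp
  qed
  show ?thesis
    unfolding simple_proc_def
  proof (intro exI[of _ N] exI[of _ tt] exI[of _ "\<lambda>j. \<eta> (tt j)"] conjI)
    show "tt 0 = 0" by (rule tt0)
    show "tt N = T" by (rule ttN)
    show "\<forall>j<N. tt j < tt (Suc j)" by (rule mono)
    show "\<forall>j<N. \<eta> (tt j) \<in> Lip_cyl (tt j)"
    proof (intro allI impI)
      fix j assume j: "j < N"
      have "0 \<le> tt j" using tt0 le[of 0 j] j Nn by auto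
      moreover have "tt j < T" using ttN lt[of j N] j Nn by auto
      ultimately show "\<eta> (tt j) \<in> Lip_cyl (tt j)" using P(6) by auto
    qed
    show "\<eta> = (\<lambda>t w. \<Sum>j<N. \<eta> (tt j) w * indicator {tt j..<tt (Suc j)} t)"
    proof (intro ext)
      fix t w
      show "\<eta> t w = (\<Sum>j<N. \<eta> (tt j) w * indicator {tt j..<tt (Suc j)} t)"
      proof (cases "0 \<le> t \<and> t < T")
        case True
        then obtain j where j: "j < N" "tt j \<le> t" "t < tt (Suc j)"
          using tt_interval[OF mono, of t] tt0 ttN by auto
        have "\<eta> (tt j) = \<eta> t"
        proof (rule P(7)[rule_format])
          show "0 \<le> tt j" using tt0 le[of 0 j] j Nn by auto
          show "tt j \<le> t" "t < T" using j True by auto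
          fix p assume p: "p \<in> P"
          then obtain i where i: "i < n" "tt i = p" using setL unfolding tt_def n_def by (metis in_set_conv_nth)
          show "\<not> (tt j < p \<and> p \<le> t)"
          proof
            assume a: "tt j < p \<and> p \<le> t"
            have "\<not> i \<le> j" using le[of i j] i a j Nn by auto
            then have "Suc j \<le> i" by simp
            then have "tt (Suc j) \<le> p" using le[of "Suc j" i] i by auto
            then show False using a j by auto
          qed
        qed
        then show ?thesis using tt_sum[OF mono j, of "\<lambda>j. \<eta> (tt j) w"] by simp
      next
        case False
        then show ?thesis using P(5) tt_sum_out[OF mono, of t "\<lambda>j. \<eta> (tt j) w"] tt0 ttN by auto
      qed
    qed
  qed
qed



definition mask :: "real \<Rightarrow> (real \<Rightarrow> path \<Rightarrow> real) \<Rightarrow> real \<Rightarrow> path \<Rightarrow> real" where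
  "mask T X = (\<lambda>t w. if 0 \<le> t \<and> t < T then X t w else 0)"

lemma stepT_comp2:
  assumes s1: "stepT T u1" and s2: "stepT T u2" and \<Phi>: "LLip \<Phi>"
  shows "stepT T (mask T (\<lambda>t w. \<Phi> (u1 t w) (u2 t w)))"
proof -
  obtain P1 where P1: "finite P1" "0 \<in> P1" "T \<in> P1" "P1 \<subseteq> {0..T}"
     "\<forall>t w. \<not> (0 \<le> t \<and> t < T) \<longrightarrow> u1 t w = 0"
     "\<forall>t. 0 \<le> t \<and> t < T \<longrightarrow> u1 t \<in> Lip_cyl t"
     "\<forall>t t'. 0 \<le> t \<longrightarrow> t \<le> t' \<longrightarrow> t' < T \<longrightarrow> (\<forall>p\<in>P1. \<not> (t < p \<and> p \<le> t')) \<longrightarrow> u1 t = u1 t'"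
    using s1 unfolding stepT_def by blast
  obtain P2 where P2: "finite P2" "0 \<in> P2" "T \<in> P2" "P2 \<subseteq> {0..T}"
     "\<forall>t w. \<not> (0 \<le> t \<and> t < T) \<longrightarrow> u2 t w = 0"
     "\<forall>t. 0 \<le> t \<and> t < T \<longrightarrow> u2 t \<in> Lip_cyl t"
     "\<forall>t t'. 0 \<le> t \<longrightarrow> t \<le> t' \<longrightarrow> t' < T \<longrightarrow> (\<forall>p\<in>P2. \<not> (t < p \<and> p \<le> t')) \<longrightarrow> u2 t = u2 t'"
    using s2 unfolding stepT_def by blast
  show ?thesis
    unfolding stepT_def
  proof (intro exI[of _ "P1 \<union> P2"] conjI allI impI)
    show "finite (P1 \<union> P2)" "0 \<in> P1 \<union> P2" "T \<in> P1 \<union> P2" "P1 \<union> P2 \<subseteq> {0..T}" using P1 P2 by auto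
    fix t w assume "\<not> (0 \<le> t \<and> t < T)"
    then show "mask T (\<lambda>t w. \<Phi> (u1 t w) (u2 t w)) t w = 0" unfolding mask_def by auto
  next
    fix t assume t: "0 \<le> t \<and> t < T"
    have "mask T (\<lambda>t w. \<Phi> (u1 t w) (u2 t w)) t = (\<lambda>w. \<Phi> (u1 t w) (u2 t w))"
      using t unfolding mask_def by auto
    then show "mask T (\<lambda>t w. \<Phi> (u1 t w) (u2 t w)) t \<in> Lip_cyl t"
      using Lip_cyl_comp2[OF \<Phi>, of "u1 t" t "u2 t"] P1(6) P2(6) t by auto
  next
    fix t t' assume t: "0 \<le> t" "t \<le> t'" "t' < T" and np: "\<forall>p\<in>P1 \<union> P2. \<not> (t < p \<and> p \<le> t')"
    have "u1 t = u1 t'" using P1(7) t np by blast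
    moreover have "u2 t = u2 t'" using P2(7) t np by blast
    ultimately show "mask T (\<lambda>t w. \<Phi> (u1 t w) (u2 t w)) t = mask T (\<lambda>t w. \<Phi> (u1 t w) (u2 t w)) t'"
      using t unfolding mask_def by (auto simp: fun_eq_iff)
  qed
qed

lemma stepT_zero:
  assumes "0 \<le> T" shows "stepT T (\<lambda>t w. 0)"
  unfolding stepT_def
  by (rule exI[of _ "{0, T}"]) (use assms Lip_cyl_const[of 0] in auto)

lemma stepT_bounded:
  assumes st: "stepT T u"
  shows "\<exists>C. \<forall>t w. \<bar>u t w\<bar> \<le> C"
proof -
  obtain P where P: "finite P" "0 \<in> P" "T \<in> P" "P \<subseteq> {0..T}"
     "\<forall>t w. \<not> (0 \<le> t \<and> t < T) \<longrightarrow> u t w = 0"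
     "\<forall>t. 0 \<le> t \<and> t < T \<longrightarrow> u t \<in> Lip_cyl t"
     "\<forall>t t'. 0 \<le> t \<longrightarrow> t \<le> t' \<longrightarrow> t' < T \<longrightarrow> (\<forall>p\<in>P. \<not> (t < p \<and> p \<le> t')) \<longrightarrow> u t = u t'"
    using st unfolding stepT_def by blast
  define Cb where "Cb = (\<lambda>p. SOME C. \<forall>w. \<bar>u p w\<bar> \<le> C)"
  have Cb: "\<bar>u p w\<bar> \<le> Cb p" if "p \<in> P" "p < T" for p w
  proof -
    have "0 \<le> p" using P(4) that by auto
    then have "\<exists>C. \<forall>w. \<bar>u p w\<bar> \<le> C" using Lip_cyl_bounded[of "u p" p] P(6) that by auto
    from someI_ex[OF this] show ?thesis unfolding Cb_def by blast
  qed
  define C where "C = (\<Sum>p\<in>P. \<bar>Cb p\<bar>)"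
  have "\<bar>u t w\<bar> \<le> C" for t w
  proof (cases "0 \<le> t \<and> t < T")
    case True
    define p where "p = Max {p \<in> P. p \<le> t}"
    have fin: "finite {p \<in> P. p \<le> t}" using P(1) by simp
    have ne: "{p \<in> P. p \<le> t} \<noteq> {}" using P(2) True by auto
    have pin: "p \<in> P" "p \<le> t" using Max_in[OF fin ne] unfolding p_def by auto
    have p0: "0 \<le> p" using pin P(4) by auto
    have "u p = u t"
    proof (rule P(7)[rule_format])
      show "0 \<le> p" "p \<le> t" "t < T" using p0 pin True by auto
      fix q assume "q \<in> P"
      then show "\<not> (p < q \<and> q \<le> t)" using Max_ge[OF fin, of q] unfolding p_def by auto
    qed
    then have "\<bar>u t w\<bar> = \<bar>u p w\<bar>" by simp
    also have "\<dots> \<le> Cb p" using Cb pin True by auto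
    also have "\<dots> \<le> \<bar>Cb p\<bar>" by simp
    also have "\<dots> \<le> C" unfolding C_def using pin P(1) by (intro member_le_sum) auto
    finally show ?thesis .
  next
    case False
    then have "u t w = 0" using P(5) by auto
    then show ?thesis unfolding C_def by (simp add: sum_nonneg)
  qed
  then show ?thesis by blast
qed

lemma LLip_global:
  assumes "\<And>a b a' b'. \<bar>\<Phi> a b - \<Phi> a' b'\<bar> \<le> K * (\<bar>a - a'\<bar> + \<bar>b - b'\<bar>)"
  shows "LLip \<Phi>"
  unfolding LLip_def using assms by blast

lemma LLip_mult: "LLip (\<lambda>a b. a * b)"
  unfolding LLip_def
proof (intro allI exI[of _ "max _ 0"] impI)
  fix B a b a' b' :: real
  assume h: "\<bar>a\<bar> \<le> B" "\<bar>b\<bar> \<le> B" "\<bar>a'\<bar> \<le> B" "\<bar>b'\<bar> \<le> B"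
  have "\<bar>a * b - a' * b'\<bar> = \<bar>a * (b - b') + b' * (a - a')\<bar>" by (simp add: algebra_simps)
  also have "\<dots> \<le> \<bar>a\<bar> * \<bar>b - b'\<bar> + \<bar>b'\<bar> * \<bar>a - a'\<bar>" by (metis abs_mult abs_triangle_ineq)
  also have "\<dots> \<le> max B 0 * \<bar>b - b'\<bar> + max B 0 * \<bar>a - a'\<bar>"
    using h by (intro add_mono mult_right_mono) auto
  finally show "\<bar>a * b - a' * b'\<bar> \<le> max B 0 * (\<bar>a - a'\<bar> + \<bar>b - b'\<bar>)" by (simp add: algebra_simps)
qed

lemma LLip_unary:
  assumes "\<And>a a'. \<bar>\<psi> a - \<psi> a'\<bar> \<le> K * \<bar>a - a'\<bar>" "0 \<le> K"
  shows "LLip (\<lambda>a b. \<psi> a)"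
proof (rule LLip_global[of _ K])
  fix a b a' b' :: real
  have "\<bar>\<psi> a - \<psi> a'\<bar> \<le> K * \<bar>a - a'\<bar>" by (rule assms(1))
  also have "\<dots> \<le> K * (\<bar>a - a'\<bar> + \<bar>b - b'\<bar>)" using assms(2) by (intro mult_left_mono) auto
  finally show "\<bar>\<psi> a - \<psi> a'\<bar> \<le> K * (\<bar>a - a'\<bar> + \<bar>b - b'\<bar>)" .
qed

lemma MG_intro:
  assumes "\<And>e. 0 < e \<Longrightarrow> \<exists>u. simple_proc T u \<and> normM sl su 2 T (\<lambda>t w. \<eta> t w - u t w) \<le> ennreal e"
  shows "\<eta> \<in> MG sl su 2 T"
proof -
  have "\<forall>n::nat. \<exists>u. simple_proc T u \<and> normM sl su 2 T (\<lambda>t w. \<eta> t w - u t w) \<le> ennreal (inverse (real (Suc n)))"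
    using assms by simp
  then obtain U where U: "\<And>n. simple_proc T (U n)"
      "\<And>n. normM sl su 2 T (\<lambda>t w. \<eta> t w - U n t w) \<le> ennreal (inverse (real (Suc n)))"
    by metis
  have "(\<lambda>n. normM sl su 2 T (\<lambda>t w. \<eta> t w - U n t w)) \<longlonglongrightarrow> 0"
  proof (rule tendsto_sandwich[of "\<lambda>_. 0" _ _ "\<lambda>n. ennreal (inverse (real (Suc n)))"])
    show "\<forall>\<^sub>F n in sequentially. 0 \<le> normM sl su 2 T (\<lambda>t w. \<eta> t w - U n t w)" by simp
    show "\<forall>\<^sub>F n in sequentially. normM sl su 2 T (\<lambda>t w. \<eta> t w - U n t w) \<le> ennreal (inverse (real (Suc n)))"
      using U(2) by simp
    show "(\<lambda>_. 0::ennreal) \<longlonglongrightarrow> 0" by simp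
    show "(\<lambda>n. ennreal (inverse (real (Suc n)))) \<longlonglongrightarrow> 0"
      using tendsto_ennrealI[OF LIMSEQ_inverse_real_of_nat] by simp
  qed
  then show ?thesis unfolding MG_def using U(1) by blast
qed

lemma MG_approx:
  assumes "\<eta> \<in> MG sl su p T" "0 < e"
  shows "\<exists>u. simple_proc T u \<and> normM sl su p T (\<lambda>t w. \<eta> t w - u t w) < ennreal e"
proof -
  obtain u where u: "\<forall>n::nat. simple_proc T (u n)" "(\<lambda>n. normM sl su p T (\<lambda>t w. \<eta> t w - u n t w)) \<longlonglongrightarrow> 0"
    using assms(1) unfolding MG_def by blast
  have "\<forall>\<^sub>F n in sequentially. normM sl su p T (\<lambda>t w. \<eta> t w - u n t w) < ennreal e"
    using order_tendstoD(2)[OF u(2), of "ennreal e"] assms(2) by simp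
  then obtain n where "normM sl su p T (\<lambda>t w. \<eta> t w - u n t w) < ennreal e"
    by (meson eventually_sequentially order_refl)
  then show ?thesis using u(1) by blast
qed

lemma sq_sum_le: "(a + b)\<^sup>2 \<le> 2 * a\<^sup>2 + 2 * b\<^sup>2" for a b :: real
  by (smt (verit) sum_squares_bound power2_sum)

lemma MG_closed:
  assumes T: "0 < T"
    and "\<And>e. 0 < e \<Longrightarrow> \<exists>\<theta>\<in>MG sl su 2 T. normM sl su 2 T (\<lambda>t w. \<eta> t w - \<theta> t w) \<le> ennreal e"
  shows "\<eta> \<in> MG sl su 2 T"
proof (rule MG_intro)
  fix e :: real assume e: "0 < e"
  obtain \<theta> where \<theta>: "\<theta> \<in> MG sl su 2 T" "normM sl su 2 T (\<lambda>t w. \<eta> t w - \<theta> t w) \<le> ennreal (e / 4)"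
    using assms(2)[of "e/4"] e by auto
  obtain u where u: "simple_proc T u" "normM sl su 2 T (\<lambda>t w. \<theta> t w - u t w) < ennreal (e / 4)"
    using MG_approx[OF \<theta>(1), of "e/4"] e by auto
  have "normM sl su 2 T (\<lambda>t w. \<eta> t w - u t w) \<le> ennreal 2 * normM sl su 2 T (\<lambda>t w. \<eta> t w - \<theta> t w)
      + ennreal 2 * normM sl su 2 T (\<lambda>t w. \<theta> t w - u t w) + ennreal (0 * T)"
  proof (rule normM_le)
    fix t w
    show "\<bar>\<eta> t w - u t w\<bar> powr 2 \<le> 2 * \<bar>\<eta> t w - \<theta> t w\<bar> powr 2 + 2 * \<bar>\<theta> t w - u t w\<bar> powr 2 + 0"
      unfolding abs_powr2 using sq_sum_le[of "\<eta> t w - \<theta> t w" "\<theta> t w - u t w"] by simp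
  qed (use T in auto)
  also have "\<dots> \<le> ennreal 2 * ennreal (e/4) + ennreal 2 * ennreal (e/4) + 0"
    using \<theta>(2) u(2) by (intro add_mono mult_left_mono) auto
  also have "\<dots> = ennreal (2 * (e/4)) + ennreal (2 * (e/4))"
    using e by (subst (1 2) ennreal_mult) auto
  also have "\<dots> = ennreal e" using e by (subst ennreal_plus[symmetric]) auto
  finally show "\<exists>u. simple_proc T u \<and> normM sl su 2 T (\<lambda>t w. \<eta> t w - u t w) \<le> ennreal e"
    using u(1) by blast
qed

lemma MG_comp2:
  assumes T: "0 < T" and K: "\<And>a b a' b'. \<bar>\<Phi> a b - \<Phi> a' b'\<bar> \<le> K * (\<bar>a - a'\<bar> + \<bar>b - b'\<bar>)"
    and e1: "\<eta>1 \<in> MG sl su 2 T" and e2: "\<eta>2 \<in> MG sl su 2 T"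
  shows "(\<lambda>t w. \<Phi> (\<eta>1 t w) (\<eta>2 t w)) \<in> MG sl su 2 T"
proof (rule MG_intro)
  fix e :: real assume e: "0 < e"
  define c where "c = 2 * K\<^sup>2"
  have c0: "0 \<le> c" unfolding c_def by simp
  define e' where "e' = e / (2 * c + 1)"
  have e'0: "0 < e'" unfolding e'_def using e c0 by simp
  obtain u1 where u1: "simple_proc T u1" "normM sl su 2 T (\<lambda>t w. \<eta>1 t w - u1 t w) < ennreal e'"
    using MG_approx[OF e1 e'0] by auto
  obtain u2 where u2: "simple_proc T u2" "normM sl su 2 T (\<lambda>t w. \<eta>2 t w - u2 t w) < ennreal e'"
    using MG_approx[OF e2 e'0] by auto
  define v where "v = mask T (\<lambda>t w. \<Phi> (u1 t w) (u2 t w))"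
  have v: "simple_proc T v"
    unfolding v_def by (rule step_to_simple[OF T stepT_comp2[OF simple_to_step[OF u1(1)] simple_to_step[OF u2(1)] LLip_global[OF K]]])
  have "normM sl su 2 T (\<lambda>t w. \<Phi> (\<eta>1 t w) (\<eta>2 t w) - v t w) \<le> ennreal c * normM sl su 2 T (\<lambda>t w. \<eta>1 t w - u1 t w)
      + ennreal c * normM sl su 2 T (\<lambda>t w. \<eta>2 t w - u2 t w) + ennreal (0 * T)"
  proof (rule normM_le)
    fix t w assume t: "0 \<le> t" "t < T"
    have vt: "v t w = \<Phi> (u1 t w) (u2 t w)" unfolding v_def mask_def using t by simp
    have "\<bar>\<Phi> (\<eta>1 t w) (\<eta>2 t w) - v t w\<bar> \<le> K * (\<bar>\<eta>1 t w - u1 t w\<bar> + \<bar>\<eta>2 t w - u2 t w\<bar>)"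
      unfolding vt by (rule K)
    then have "\<bar>\<Phi> (\<eta>1 t w) (\<eta>2 t w) - v t w\<bar>\<^sup>2 \<le> (K * (\<bar>\<eta>1 t w - u1 t w\<bar> + \<bar>\<eta>2 t w - u2 t w\<bar>))\<^sup>2"
      by (intro power_mono) auto
    also have "\<dots> = K\<^sup>2 * (\<bar>\<eta>1 t w - u1 t w\<bar> + \<bar>\<eta>2 t w - u2 t w\<bar>)\<^sup>2" by (simp add: power_mult_distrib)
    also have "\<dots> \<le> K\<^sup>2 * (2 * \<bar>\<eta>1 t w - u1 t w\<bar>\<^sup>2 + 2 * \<bar>\<eta>2 t w - u2 t w\<bar>\<^sup>2)"
      by (intro mult_left_mono sq_sum_le) auto
    finally show "\<bar>\<Phi> (\<eta>1 t w) (\<eta>2 t w) - v t w\<bar> powr 2 \<le> c * \<bar>\<eta>1 t w - u1 t w\<bar> powr 2 + c * \<bar>\<eta>2 t w - u2 t w\<bar> powr 2 + 0"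
      unfolding abs_powr2 c_def by (simp add: algebra_simps)
  qed (use T c0 in auto)
  also have "\<dots> \<le> ennreal c * ennreal e' + ennreal c * ennreal e' + 0"
    using u1(2) u2(2) by (intro add_mono mult_left_mono) auto
  also have "\<dots> = ennreal (2 * c * e')" using c0 e'0 by (simp add: ennreal_mult[symmetric] ennreal_plus[symmetric])
  also have "\<dots> \<le> ennreal e"
  proof (rule ennreal_leI)
    have "2 * c * e' = e * (2 * c / (2 * c + 1))" unfolding e'_def using c0 by (simp add: field_simps)
    also have "\<dots> \<le> e * 1" using e c0 by (intro mult_left_mono) auto
    finally show "2 * c * e' \<le> e" by simp
  qed
  finally show "\<exists>u. simple_proc T u \<and> normM sl su 2 T (\<lambda>t w. \<Phi> (\<eta>1 t w) (\<eta>2 t w) - u t w) \<le> ennreal e"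
    using v by blast
qed

lemma MG_zero:
  assumes "0 < T" shows "(\<lambda>t w. 0) \<in> MG sl su 2 T"
proof (rule MG_intro)
  fix e :: real assume e: "0 < e"
  have s: "simple_proc T (\<lambda>t w. 0)" using step_to_simple[OF assms stepT_zero] assms by simp
  have "normM sl su 2 T (\<lambda>t w. 0 - 0) \<le> ennreal 0 * normM sl su 2 T (\<lambda>t w. 0)
       + ennreal 0 * normM sl su 2 T (\<lambda>t w. 0) + ennreal (0 * T)"
    by (rule normM_le) (use assms in auto)
  also have "\<dots> \<le> ennreal e" by simp
  finally show "\<exists>u. simple_proc T u \<and> normM sl su 2 T (\<lambda>t w. 0 - u t w) \<le> ennreal e"
    using s by auto
qed

lemma MG_add:
  assumes "0 < T" "\<eta>1 \<in> MG sl su 2 T" "\<eta>2 \<in> MG sl su 2 T"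
  shows "(\<lambda>t w. \<eta>1 t w + \<eta>2 t w) \<in> MG sl su 2 T"
  by (rule MG_comp2[OF assms(1) _ assms(2,3), of _ 1]) (smt (verit))

lemma MG_diff:
  assumes "0 < T" "\<eta>1 \<in> MG sl su 2 T" "\<eta>2 \<in> MG sl su 2 T"
  shows "(\<lambda>t w. \<eta>1 t w - \<eta>2 t w) \<in> MG sl su 2 T"
  by (rule MG_comp2[OF assms(1) _ assms(2,3), of _ 1]) (smt (verit))

lemma MG_sum:
  assumes T: "0 < T" and fin: "finite S" and X: "\<And>k. k \<in> S \<Longrightarrow> X k \<in> MG sl su 2 T"
  shows "(\<lambda>t w. \<Sum>k\<in>S. X k t w) \<in> MG sl su 2 T"
  using fin X
proof (induction S rule: finite_induct)
  case empty then show ?case using MG_zero[OF T] by simp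
next
  case (insert x F)
  have "(\<lambda>t w. X x t w + (\<Sum>k\<in>F. X k t w)) \<in> MG sl su 2 T"
    by (rule MG_add[OF T]) (use insert in auto)
  then show ?case using insert by simp
qed

lemma MG_mult_step:
  assumes T: "0 < T" and \<rho>: "stepT T \<rho>" and \<theta>: "\<theta> \<in> MG sl su 2 T"
  shows "(\<lambda>t w. \<rho> t w * \<theta> t w) \<in> MG sl su 2 T"
proof (rule MG_intro)
  fix e :: real assume e: "0 < e"
  obtain C where C: "\<And>t w. \<bar>\<rho> t w\<bar> \<le> C" using stepT_bounded[OF \<rho>] by blast
  define c where "c = C\<^sup>2"
  have c0: "0 \<le> c" unfolding c_def by simp
  define e' where "e' = e / (c + 1)"
  have e'0: "0 < e'" unfolding e'_def using e c0 by simp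
  obtain u where u: "simple_proc T u" "normM sl su 2 T (\<lambda>t w. \<theta> t w - u t w) < ennreal e'"
    using MG_approx[OF \<theta> e'0] by auto
  define v where "v = mask T (\<lambda>t w. \<rho> t w * u t w)"
  have v: "simple_proc T v"
    unfolding v_def by (rule step_to_simple[OF T stepT_comp2[OF \<rho> simple_to_step[OF u(1)] LLip_mult]])
  have "normM sl su 2 T (\<lambda>t w. \<rho> t w * \<theta> t w - v t w) \<le> ennreal c * normM sl su 2 T (\<lambda>t w. \<theta> t w - u t w)
      + ennreal 0 * normM sl su 2 T (\<lambda>t w. \<theta> t w - u t w) + ennreal (0 * T)"
  proof (rule normM_le)
    fix t w assume t: "0 \<le> t" "t < T"
    have vt: "v t w = \<rho> t w * u t w" unfolding v_def mask_def using t by simp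
    have "\<bar>\<rho> t w * \<theta> t w - v t w\<bar>\<^sup>2 = (\<rho> t w)\<^sup>2 * (\<theta> t w - u t w)\<^sup>2"
      unfolding vt by (simp add: power_mult_distrib[symmetric] algebra_simps)
    also have "\<dots> \<le> c * (\<theta> t w - u t w)\<^sup>2" unfolding c_def
      using C[of t w] by (intro mult_right_mono) (auto simp: abs_le_square_iff[symmetric] intro: order_trans[OF _ abs_ge_self])
    finally show "\<bar>\<rho> t w * \<theta> t w - v t w\<bar> powr 2 \<le> c * \<bar>\<theta> t w - u t w\<bar> powr 2 + 0 * \<bar>\<theta> t w - u t w\<bar> powr 2 + 0"
      unfolding abs_powr2 by simp
  qed (use T c0 in auto)
  also have "\<dots> \<le> ennreal c * ennreal e'"
    using u(2) by (simp add: mult_left_mono)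
  also have "\<dots> = ennreal (c * e')" using c0 e'0 by (simp add: ennreal_mult[symmetric])
  also have "\<dots> \<le> ennreal e"
  proof (rule ennreal_leI)
    have "c * e' = e * (c / (c + 1))" unfolding e'_def using c0 by (simp add: field_simps)
    also have "\<dots> \<le> e * 1" using e c0 by (intro mult_left_mono) auto
    finally show "c * e' \<le> e" by simp
  qed
  finally show "\<exists>u. simple_proc T u \<and> normM sl su 2 T (\<lambda>t w. \<rho> t w * \<theta> t w - u t w) \<le> ennreal e"
    using v by blast
qed



definition rho :: "real \<Rightarrow> int \<Rightarrow> real \<Rightarrow> real" where
  "rho h k x = max 0 (1 - \<bar>x - of_int k * h\<bar> / h)"

lemma max_lip: "\<bar>max 0 (1 - A) - max 0 (1 - A')\<bar> \<le> \<bar>A - A'\<bar>" for A A' :: real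
  by (auto simp: max_def abs_if)

lemma rho_lip:
  assumes h: "0 < h" shows "\<bar>rho h k a - rho h k a'\<bar> \<le> (1/h) * \<bar>a - a'\<bar>"
proof -
  have "\<bar>\<bar>a - of_int k * h\<bar> - \<bar>a' - of_int k * h\<bar>\<bar> \<le> \<bar>a - a'\<bar>" by linarith
  then have "\<bar>\<bar>a - of_int k * h\<bar> / h - \<bar>a' - of_int k * h\<bar> / h\<bar> \<le> \<bar>a - a'\<bar> / h"
    using h by (simp add: diff_divide_distrib[symmetric] divide_right_mono)
  then show ?thesis unfolding rho_def using max_lip[of "\<bar>a - of_int k * h\<bar> / h" "\<bar>a' - of_int k * h\<bar> / h"]
    by simp
qed

lemma hat_interp:
  fixes g :: "real \<Rightarrow> real" and M :: nat
  assumes h: "0 < h" and x: "- (real M * h) < x" "x < real M * h"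
    and L: "0 \<le> L" and lip: "\<And>a b. \<bar>g a - g b\<bar> \<le> L * \<bar>a - b\<bar>"
  shows "\<bar>g x - (\<Sum>k\<in>{- int M..int M}. rho h k x * g (of_int k * h))\<bar> \<le> L * h"
proof -
  define j where "j = \<lfloor>x / h\<rfloor>"
  define \<theta> where "\<theta> = x / h - of_int j"
  have th: "0 \<le> \<theta>" "\<theta> < 1" unfolding \<theta>_def j_def by linarith+
  have xj: "x = (of_int j + \<theta>) * h" unfolding \<theta>_def using h by (simp add: field_simps)
  have "x / h < real M" using x h by (simp add: field_simps)
  then have j1: "j + 1 \<le> int M" unfolding j_def by linarith
  have "- real M < x / h" using x h by (simp add: field_simps)
  then have j0: "- int M \<le> j" unfolding j_def by linarith
  have rj: "rho h j x = 1 - \<theta>"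
  proof -
    have "\<bar>x - of_int j * h\<bar> = \<theta> * h" using xj th h by (simp add: algebra_simps)
    then show ?thesis unfolding rho_def using h th by simp
  qed
  have rj1: "rho h (j + 1) x = \<theta>"
  proof -
    have "\<bar>x - of_int (j + 1) * h\<bar> = (1 - \<theta>) * h" using xj th h by (simp add: algebra_simps)
    then show ?thesis unfolding rho_def using h th by simp
  qed
  have r0: "rho h k x = 0" if "k \<noteq> j" "k \<noteq> j + 1" for k
  proof -
    have th0: "0 \<le> \<theta> * h" using th h by simp
    have th1: "\<theta> * h < h" using th h by simp
    have xj': "x = of_int j * h + \<theta> * h" using xj by (simp add: algebra_simps)
    have "k \<le> j - 1 \<or> j + 2 \<le> k" using that by linarith
    then have "h \<le> \<bar>x - of_int k * h\<bar>"
    proof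
      assume "k \<le> j - 1"
      then have "of_int k * h \<le> (of_int j - 1) * h" using h by (intro mult_right_mono) (auto simp: of_int_le_iff[symmetric])
      then have "of_int k * h \<le> of_int j * h - h" by (simp add: algebra_simps)
      then show ?thesis using xj' th0 by linarith
    next
      assume "j + 2 \<le> k"
      then have "(of_int j + 2) * h \<le> of_int k * h" using h by (intro mult_right_mono) (auto simp: of_int_le_iff[symmetric])
      then have "of_int j * h + 2 * h \<le> of_int k * h" by (simp add: algebra_simps)
      then show ?thesis using xj' th1 by linarith
    qed
    then have "1 - \<bar>x - of_int k * h\<bar> / h \<le> 0" using h by (simp add: field_simps)
    then show ?thesis unfolding rho_def by simp
  qed
  define S where "S = {- int M..int M}"
  have jS: "j \<in> S" "j + 1 \<in> S - {j}" unfolding S_def using j0 j1 by auto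
  have "(\<Sum>k\<in>S. rho h k x * g (of_int k * h)) = rho h j x * g (of_int j * h)
      + (\<Sum>k\<in>S - {j}. rho h k x * g (of_int k * h))"
    using jS by (subst sum.remove[of _ j]) (auto simp: S_def)
  also have "(\<Sum>k\<in>S - {j}. rho h k x * g (of_int k * h)) = rho h (j+1) x * g (of_int (j+1) * h)
      + (\<Sum>k\<in>S - {j} - {j+1}. rho h k x * g (of_int k * h))"
    using jS by (subst sum.remove[of _ "j+1"]) (auto simp: S_def)
  also have "(\<Sum>k\<in>S - {j} - {j+1}. rho h k x * g (of_int k * h)) = 0"
    using r0 by (intro sum.neutral) auto
  finally have sum: "(\<Sum>k\<in>S. rho h k x * g (of_int k * h)) = (1 - \<theta>) * g (of_int j * h) + \<theta> * g (of_int (j+1) * h)"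
    using rj rj1 by simp
  have d1: "\<bar>g x - g (of_int j * h)\<bar> \<le> L * (\<theta> * h)"
    using lip[of x "of_int j * h"] xj th h by (simp add: algebra_simps)
  have d2: "\<bar>g x - g (of_int (j+1) * h)\<bar> \<le> L * ((1 - \<theta>) * h)"
  proof -
    have "\<bar>x - of_int (j+1) * h\<bar> = (1 - \<theta>) * h" using xj th h by (simp add: algebra_simps)
    then show ?thesis using lip[of x "of_int (j+1) * h"] by simp
  qed
  have "\<bar>g x - (\<Sum>k\<in>S. rho h k x * g (of_int k * h))\<bar>
      = \<bar>(1 - \<theta>) * (g x - g (of_int j * h)) + \<theta> * (g x - g (of_int (j+1) * h))\<bar>"
    unfolding sum by (simp add: algebra_simps)
  also have "\<dots> \<le> (1 - \<theta>) * \<bar>g x - g (of_int j * h)\<bar> + \<theta> * \<bar>g x - g (of_int (j+1) * h)\<bar>"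
    using th abs_triangle_ineq[of "(1 - \<theta>) * (g x - g (of_int j * h))" "\<theta> * (g x - g (of_int (j+1) * h))"]
    by (simp add: abs_mult)
  also have "\<dots> \<le> (1 - \<theta>) * (L * (\<theta> * h)) + \<theta> * (L * ((1 - \<theta>) * h))"
    using th d1 d2 by (intro add_mono mult_left_mono) auto
  also have "\<dots> = L * h * (2 * \<theta> * (1 - \<theta>))" by (simp add: algebra_simps)
  also have "\<dots> \<le> L * h * 1"
  proof (intro mult_left_mono)
    have "0 \<le> (2 * \<theta> - 1)\<^sup>2" by simp
    then show "2 * \<theta> * (1 - \<theta>) \<le> 1" by (simp add: power2_eq_square algebra_simps)
  qed (use L h in auto)
  finally show ?thesis unfolding S_def by simp
qed



lemma MG_family_step:
  assumes T: "0 < T" and fam: "\<And>z. (\<lambda>t w. \<phi> t w z) \<in> MG sl su 2 T"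
    and lip: "\<And>t w z z'. 0 \<le> t \<Longrightarrow> \<bar>\<phi> t w z - \<phi> t w z'\<bar> \<le> L * \<bar>z - z'\<bar>"
    and L: "0 \<le> L" and u: "stepT T u"
  shows "(\<lambda>t w. \<phi> t w (u t w)) \<in> MG sl su 2 T"
proof (rule MG_closed[OF T])
  fix e :: real assume e: "0 < e"
  obtain C0 where C0: "\<And>t w. \<bar>u t w\<bar> \<le> C0" using stepT_bounded[OF u] by blast
  define C where "C = \<bar>C0\<bar> + 1"
  have C: "\<bar>u t w\<bar> < C" for t w using C0[of t w] unfolding C_def by linarith
  have C1: "0 < C" unfolding C_def by simp
  define h where "h = sqrt (e / (T * (L\<^sup>2 + 1)))"
  have pos: "0 < e / (T * (L\<^sup>2 + 1))"
    using e T by (intro divide_pos_pos mult_pos_pos) (auto intro: add_nonneg_pos)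
  have h0: "0 < h" unfolding h_def using pos by simp
  have h2: "h\<^sup>2 = e / (T * (L\<^sup>2 + 1))" unfolding h_def using pos by simp
  define M where "M = nat \<lceil>C / h\<rceil>"
  have M: "C \<le> real M * h"
  proof -
    have "C / h \<le> real M" unfolding M_def by linarith
    then show ?thesis using h0 by (simp add: field_simps)
  qed
  define S where "S = {- int M..int M}"
  define \<theta> where "\<theta> = (\<lambda>t w. \<Sum>k\<in>S. mask T (\<lambda>t w. rho h k (u t w)) t w * \<phi> t w (of_int k * h))"
  have \<theta>MG: "\<theta> \<in> MG sl su 2 T"
    unfolding \<theta>_def
  proof (rule MG_sum[OF T])
    show "finite S" unfolding S_def by simp
    fix k
    have st: "stepT T (mask T (\<lambda>t w. (\<lambda>a b. rho h k a) (u t w) (u t w)))"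
      by (rule stepT_comp2[OF u u LLip_unary[OF rho_lip[OF h0]]]) (use h0 in simp)
    show "(\<lambda>t w. mask T (\<lambda>t w. rho h k (u t w)) t w * \<phi> t w (of_int k * h)) \<in> MG sl su 2 T"
      by (rule MG_mult_step[OF T _ fam]) (use st in simp)
  qed
  have "normM sl su 2 T (\<lambda>t w. \<phi> t w (u t w) - \<theta> t w) \<le> ennreal 0 * normM sl su 2 T \<theta>
       + ennreal 0 * normM sl su 2 T \<theta> + ennreal ((L * h)\<^sup>2 * T)"
  proof (rule normM_le)
    fix t w assume t: "0 \<le> t" "t < T"
    have m: "mask T (\<lambda>t w. rho h k (u t w)) t w = rho h k (u t w)" for k
      unfolding mask_def using t by simp
    have "\<bar>\<phi> t w (u t w) - \<theta> t w\<bar> \<le> L * h"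
      unfolding \<theta>_def m S_def
    proof (rule hat_interp[OF h0 _ _ L])
      show "- (real M * h) < u t w" "u t w < real M * h" using C[of t w] M by auto
      show "\<bar>\<phi> t w a - \<phi> t w b\<bar> \<le> L * \<bar>a - b\<bar>" for a b using lip t by auto
    qed
    then have "\<bar>\<phi> t w (u t w) - \<theta> t w\<bar>\<^sup>2 \<le> (L * h)\<^sup>2"
      by (intro power_mono) auto
    then show "\<bar>\<phi> t w (u t w) - \<theta> t w\<bar> powr 2 \<le> 0 * \<bar>\<theta> t w\<bar> powr 2 + 0 * \<bar>\<theta> t w\<bar> powr 2 + (L * h)\<^sup>2"
      unfolding abs_powr2 by simp
  qed (use T in auto)
  also have "\<dots> \<le> ennreal e"
  proof -
    have "(L * h)\<^sup>2 * T = e * (L\<^sup>2 / (L\<^sup>2 + 1))"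
    proof -
      have LL: "L\<^sup>2 + 1 \<noteq> 0" using zero_le_power2[of L] by linarith
      have "(L * h)\<^sup>2 * T = L\<^sup>2 * (h\<^sup>2 * T)" by (simp add: power_mult_distrib)
      also have "h\<^sup>2 * T = e / (L\<^sup>2 + 1)" unfolding h2 using T LL by simp
      finally show ?thesis by simp
    qed
    also have "\<dots> \<le> e * 1"
    proof (intro mult_left_mono)
      have "0 < L\<^sup>2 + 1" using zero_le_power2[of L] by linarith
      then show "L\<^sup>2 / (L\<^sup>2 + 1) \<le> 1" by (simp add: divide_le_eq_1)
    qed (use e in auto)
    finally show ?thesis by (simp add: ennreal_leI)
  qed
  finally show "\<exists>\<theta>\<in>MG sl su 2 T. normM sl su 2 T (\<lambda>t w. \<phi> t w (u t w) - \<theta> t w) \<le> ennreal e"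
    using \<theta>MG by blast
qed

lemma MG_family:
  assumes T: "0 < T" and fam: "\<And>z. (\<lambda>t w. \<phi> t w z) \<in> MG sl su 2 T"
    and lip: "\<And>t w z z'. 0 \<le> t \<Longrightarrow> \<bar>\<phi> t w z - \<phi> t w z'\<bar> \<le> L * \<bar>z - z'\<bar>"
    and L: "0 \<le> L" and Z: "Z \<in> MG sl su 2 T"
  shows "(\<lambda>t w. \<phi> t w (Z t w)) \<in> MG sl su 2 T"
proof (rule MG_closed[OF T])
  fix e :: real assume e: "0 < e"
  define c where "c = L\<^sup>2"
  have c0: "0 \<le> c" unfolding c_def by simp
  define e' where "e' = e / (c + 1)"
  have e'0: "0 < e'" unfolding e'_def using e c0 by simp
  obtain u where u: "simple_proc T u" "normM sl su 2 T (\<lambda>t w. Z t w - u t w) < ennreal e'"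
    using MG_approx[OF Z e'0] by auto
  have \<theta>MG: "(\<lambda>t w. \<phi> t w (u t w)) \<in> MG sl su 2 T"
    by (rule MG_family_step[OF T fam lip L simple_to_step[OF u(1)]])
  have "normM sl su 2 T (\<lambda>t w. \<phi> t w (Z t w) - \<phi> t w (u t w)) \<le> ennreal c * normM sl su 2 T (\<lambda>t w. Z t w - u t w)
      + ennreal 0 * normM sl su 2 T (\<lambda>t w. Z t w - u t w) + ennreal (0 * T)"
  proof (rule normM_le)
    fix t w assume t: "0 \<le> t" "t < T"
    have "\<bar>\<phi> t w (Z t w) - \<phi> t w (u t w)\<bar> \<le> L * \<bar>Z t w - u t w\<bar>" using lip t by auto
    then have "\<bar>\<phi> t w (Z t w) - \<phi> t w (u t w)\<bar>\<^sup>2 \<le> (L * \<bar>Z t w - u t w\<bar>)\<^sup>2"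
      by (intro power_mono) auto
    then show "\<bar>\<phi> t w (Z t w) - \<phi> t w (u t w)\<bar> powr 2 \<le> c * \<bar>Z t w - u t w\<bar> powr 2 + 0 * \<bar>Z t w - u t w\<bar> powr 2 + 0"
      unfolding abs_powr2 c_def by (simp add: power_mult_distrib)
  qed (use T c0 in auto)
  also have "\<dots> \<le> ennreal c * ennreal e'"
    using u(2) by (simp add: mult_left_mono)
  also have "\<dots> = ennreal (c * e')" using c0 e'0 by (simp add: ennreal_mult[symmetric])
  also have "\<dots> \<le> ennreal e"
  proof (rule ennreal_leI)
    have "c * e' = e * (c / (c + 1))" unfolding e'_def using c0 by (simp add: field_simps)
    also have "\<dots> \<le> e * 1" using e c0 by (intro mult_left_mono) auto
    finally show "c * e' \<le> e" by simp
  qed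
  finally show "\<exists>\<theta>\<in>MG sl su 2 T. normM sl su 2 T (\<lambda>t w. \<phi> t w (Z t w) - \<theta> t w) \<le> ennreal e"
    using \<theta>MG by (intro bexI[of _ "\<lambda>t w. \<phi> t w (u t w)"])
qed

lemma stepT_restrict:
  assumes st: "stepT n u" and T: "0 < T" "T \<le> n"
  shows "stepT T (mask T u)"
proof -
  obtain P where P: "finite P" "0 \<in> P" "n \<in> P" "P \<subseteq> {0..n}"
     "\<forall>t w. \<not> (0 \<le> t \<and> t < n) \<longrightarrow> u t w = 0"
     "\<forall>t. 0 \<le> t \<and> t < n \<longrightarrow> u t \<in> Lip_cyl t"
     "\<forall>t t'. 0 \<le> t \<longrightarrow> t \<le> t' \<longrightarrow> t' < n \<longrightarrow> (\<forall>p\<in>P. \<not> (t < p \<and> p \<le> t')) \<longrightarrow> u t = u t'"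
    using st unfolding stepT_def by blast
  show ?thesis
    unfolding stepT_def
  proof (intro exI[of _ "insert T (P \<inter> {0..T})"] conjI allI impI)
    show "finite (insert T (P \<inter> {0..T}))" using P(1) by simp
    show "0 \<in> insert T (P \<inter> {0..T})" using P(2) T by auto
    show "T \<in> insert T (P \<inter> {0..T})" by simp
    show "insert T (P \<inter> {0..T}) \<subseteq> {0..T}" using T by auto
    fix t w assume "\<not> (0 \<le> t \<and> t < T)"
    then show "mask T u t w = 0" unfolding mask_def by auto
  next
    fix t assume t: "0 \<le> t \<and> t < T"
    then have "mask T u t = u t" unfolding mask_def by (auto simp: fun_eq_iff)
    then show "mask T u t \<in> Lip_cyl t" using P(6) t T by auto
  next
    fix t t' assume t: "0 \<le> t" "t \<le> t'" "t' < T" and np: "\<forall>p\<in>insert T (P \<inter> {0..T}). \<not> (t < p \<and> p \<le> t')"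
    have "\<forall>p\<in>P. \<not> (t < p \<and> p \<le> t')"
    proof (intro ballI notI)
      fix p assume p: "p \<in> P" "t < p \<and> p \<le> t'"
      then have "p \<in> insert T (P \<inter> {0..T})" using P(4) t by auto
      then show False using np p by blast
    qed
    then have "u t = u t'" using P(7)[rule_format, of t t'] t T by auto
    then show "mask T u t = mask T u t'" using t unfolding mask_def by (auto simp: fun_eq_iff)
  qed
qed

lemma pow_split:
  fixes x d \<beta> :: real
  assumes d: "0 < d" and \<beta>: "0 < \<beta>"
  shows "\<bar>x\<bar> powr 2 \<le> d powr (- \<beta>) * \<bar>x\<bar> powr (2 + \<beta>) + d\<^sup>2"
proof (cases "\<bar>x\<bar> \<le> d")
  case True
  then have "\<bar>x\<bar> powr 2 \<le> d\<^sup>2" unfolding abs_powr2 by (metis abs_ge_zero power2_abs power_mono)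
  moreover have "0 \<le> d powr (- \<beta>) * \<bar>x\<bar> powr (2 + \<beta>)" by simp
  ultimately show ?thesis by linarith
next
  case False
  then have xp: "0 < \<bar>x\<bar>" "d < \<bar>x\<bar>" using d by auto
  have "\<bar>x\<bar> powr (2 + \<beta>) = \<bar>x\<bar> powr 2 * \<bar>x\<bar> powr \<beta>" by (simp add: powr_add)
  moreover have "d powr \<beta> \<le> \<bar>x\<bar> powr \<beta>" using xp d \<beta> by (intro powr_mono2) auto
  ultimately have "\<bar>x\<bar> powr 2 * d powr \<beta> \<le> \<bar>x\<bar> powr (2 + \<beta>)" by (simp add: mult_left_mono)
  then have "d powr (- \<beta>) * (\<bar>x\<bar> powr 2 * d powr \<beta>) \<le> d powr (- \<beta>) * \<bar>x\<bar> powr (2 + \<beta>)"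
    by (intro mult_left_mono) auto
  moreover have "d powr (- \<beta>) * (\<bar>x\<bar> powr 2 * d powr \<beta>) = \<bar>x\<bar> powr 2"
    using d by (simp add: powr_minus field_simps)
  ultimately show ?thesis by (smt (verit) zero_le_power2)
qed

lemma MG_restrict:
  assumes T: "0 < T" and \<beta>: "0 < \<beta>" and n: "T \<le> n" and \<theta>: "\<theta> \<in> MG sl su (2 + \<beta>) n"
  shows "\<theta> \<in> MG sl su 2 T"
proof (rule MG_intro)
  fix e :: real assume e: "0 < e"
  define d where "d = sqrt (e / (2 * T))"
  have d0: "0 < d" unfolding d_def using e T by simp
  have d2: "d\<^sup>2 = e / (2 * T)" unfolding d_def using e T by simp
  define c where "c = d powr (- \<beta>)"
  have c0: "0 \<le> c" unfolding c_def by simp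
  define e' where "e' = e / (2 * (c + 1))"
  have e'0: "0 < e'" unfolding e'_def using e c0 by simp
  obtain u where u: "simple_proc n u" "normM sl su (2 + \<beta>) n (\<lambda>t w. \<theta> t w - u t w) < ennreal e'"
    using MG_approx[OF \<theta> e'0] by auto
  have v: "simple_proc T (mask T u)"
    by (rule step_to_simple[OF T stepT_restrict[OF simple_to_step[OF u(1)] T n]])
  have "normM sl su 2 T (\<lambda>t w. \<theta> t w - mask T u t w) \<le> ennreal c * normM sl su (2 + \<beta>) n (\<lambda>t w. \<theta> t w - u t w)
      + ennreal 0 * normM sl su (2 + \<beta>) n (\<lambda>t w. \<theta> t w - u t w) + ennreal (d\<^sup>2 * T)"
  proof (rule normM_le)
    fix t w assume t: "0 \<le> t" "t < T"
    have "mask T u t w = u t w" unfolding mask_def using t by simp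
    then show "\<bar>\<theta> t w - mask T u t w\<bar> powr 2 \<le> c * \<bar>\<theta> t w - u t w\<bar> powr (2 + \<beta>) + 0 * \<bar>\<theta> t w - u t w\<bar> powr (2 + \<beta>) + d\<^sup>2"
      unfolding c_def using pow_split[OF d0 \<beta>, of "\<theta> t w - u t w"] by simp
  qed (use T n c0 in auto)
  also have "\<dots> \<le> ennreal c * ennreal e' + ennreal (e / 2)"
    using u(2) T d2 by (simp add: mult_left_mono)
  also have "\<dots> = ennreal (c * e' + e / 2)" using c0 e'0 e by (simp add: ennreal_mult[symmetric] ennreal_plus)
  also have "\<dots> \<le> ennreal e"
  proof (rule ennreal_leI)
    have "c * e' = (e / 2) * (c / (c + 1))" unfolding e'_def using c0 by (simp add: field_simps)
    also have "\<dots> \<le> (e / 2) * 1" using e c0 by (intro mult_left_mono) auto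
    finally show "c * e' + e / 2 \<le> e" by simp
  qed
  finally show "\<exists>u. simple_proc T u \<and> normM sl su 2 T (\<lambda>t w. \<theta> t w - u t w) \<le> ennreal e"
    using v by blast
qed



definition clipL :: "real \<Rightarrow> real \<Rightarrow> real \<Rightarrow> real" where
  "clipL L F \<delta> = max (- (L * \<bar>\<delta>\<bar>)) (min (L * \<bar>\<delta>\<bar>) F)"

definition rr :: "real \<Rightarrow> real \<Rightarrow> real" where
  "rr \<eta> \<delta> = \<delta> / (\<delta>\<^sup>2 + \<eta>\<^sup>2)"

definition psi :: "real \<Rightarrow> real \<Rightarrow> real" where
  "psi \<eta> \<delta> = \<eta>\<^sup>2 / (\<delta>\<^sup>2 + \<eta>\<^sup>2)"

definition Phi0 :: "real \<Rightarrow> real \<Rightarrow> real \<Rightarrow> real \<Rightarrow> real" where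
  "Phi0 L \<eta> F \<delta> = clipL L F \<delta> * rr \<eta> \<delta>"

lemma clamp_lip: "\<bar>max (- m) (min m F) - max (- m') (min m' F')\<bar> \<le> \<bar>F - F'\<bar> + \<bar>m - m'\<bar>" for m m' F F' :: real
  by (simp add: max_def min_def abs_if)

lemma clip_lip:
  assumes L: "0 \<le> L"
  shows "\<bar>clipL L F \<delta> - clipL L F' \<delta>'\<bar> \<le> \<bar>F - F'\<bar> + L * \<bar>\<delta> - \<delta>'\<bar>"
proof -
  have "\<bar>L * \<bar>\<delta>\<bar> - L * \<bar>\<delta>'\<bar>\<bar> = L * \<bar>\<bar>\<delta>\<bar> - \<bar>\<delta>'\<bar>\<bar>" using L by (simp add: abs_mult right_diff_distrib[symmetric])
  also have "\<dots> \<le> L * \<bar>\<delta> - \<delta>'\<bar>" using L by (intro mult_left_mono) auto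
  finally show ?thesis unfolding clipL_def using clamp_lip[of "L * \<bar>\<delta>\<bar>" F "L * \<bar>\<delta>'\<bar>" F'] by linarith
qed

lemma clip_bound: "0 \<le> L \<Longrightarrow> \<bar>clipL L F \<delta>\<bar> \<le> L * \<bar>\<delta>\<bar>"
  unfolding clipL_def by (simp add: max_def min_def abs_if)

lemma clip_id: "\<bar>F\<bar> \<le> L * \<bar>\<delta>\<bar> \<Longrightarrow> clipL L F \<delta> = F"
  unfolding clipL_def by (simp add: max_def min_def abs_le_iff)

lemma D_pos: "0 < \<eta> \<Longrightarrow> 0 < \<delta>\<^sup>2 + \<eta>\<^sup>2" for \<eta> \<delta> :: real
  by (simp add: add_nonneg_pos)

lemma aux_half: "0 < \<eta> \<Longrightarrow> \<bar>x\<bar> / (x\<^sup>2 + \<eta>\<^sup>2) \<le> 1 / (2 * \<eta>)" for x \<eta> :: real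
proof -
  assume e: "0 < \<eta>"
  have "0 \<le> (\<bar>x\<bar> - \<eta>)\<^sup>2" by simp
  then have "2 * \<eta> * \<bar>x\<bar> \<le> x\<^sup>2 + \<eta>\<^sup>2" by (simp add: power2_eq_square algebra_simps)
  then show ?thesis using e D_pos[OF e, of x] by (simp add: field_simps)
qed

lemma aux_le1: "0 < \<eta> \<Longrightarrow> \<eta>\<^sup>2 / (x\<^sup>2 + \<eta>\<^sup>2) \<le> 1" "0 < \<eta> \<Longrightarrow> x\<^sup>2 / (x\<^sup>2 + \<eta>\<^sup>2) \<le> 1" for x \<eta> :: real
  using D_pos[of \<eta> x] by (simp_all add: divide_le_eq_1)

lemma rr_bound: "0 < \<eta> \<Longrightarrow> \<bar>rr \<eta> \<delta>\<bar> \<le> 1 / (2 * \<eta>)"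
  unfolding rr_def using aux_half[of \<eta> \<delta>] D_pos[of \<eta> \<delta>] by simp

lemma rr_lip_w:
  assumes e: "0 < \<eta>"
  shows "\<bar>\<delta>\<bar> * \<bar>rr \<eta> \<delta> - rr \<eta> \<delta>'\<bar> \<le> (1 / \<eta>) * \<bar>\<delta> - \<delta>'\<bar>"
proof -
  define D where "D = \<delta>\<^sup>2 + \<eta>\<^sup>2"
  define D' where "D' = \<delta>'\<^sup>2 + \<eta>\<^sup>2"
  have D: "0 < D" "0 < D'" unfolding D_def D'_def using D_pos[OF e] by auto
  have e1: "rr \<eta> \<delta> - rr \<eta> \<delta>' = (\<delta> * D' - \<delta>' * D) / (D * D')"
    unfolding rr_def D_def[symmetric] D'_def[symmetric] using D by (simp add: field_simps)
  have e2: "\<delta> * D' - \<delta>' * D = (\<delta> - \<delta>') * (\<eta>\<^sup>2 - \<delta> * \<delta>')"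
    unfolding D_def D'_def by (simp add: algebra_simps power2_eq_square)
  have eq: "rr \<eta> \<delta> - rr \<eta> \<delta>' = (\<delta> - \<delta>') * ((\<eta>\<^sup>2 - \<delta> * \<delta>') / (D * D'))"
    unfolding e1 e2 by simp
  have "\<bar>\<delta>\<bar> * \<bar>(\<eta>\<^sup>2 - \<delta> * \<delta>') / (D * D')\<bar> = \<bar>\<delta>\<bar> * \<bar>\<eta>\<^sup>2 - \<delta> * \<delta>'\<bar> / (D * D')"
    using D by (simp add: abs_divide)
  also have "\<dots> \<le> \<bar>\<delta>\<bar> * (\<eta>\<^sup>2 + \<bar>\<delta>\<bar> * \<bar>\<delta>'\<bar>) / (D * D')"
    using D by (intro divide_right_mono mult_left_mono) (auto simp: abs_mult intro: order_trans[OF abs_triangle_ineq4])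
  also have "\<dots> = (\<bar>\<delta>\<bar> / D) * (\<eta>\<^sup>2 / D') + (\<delta>\<^sup>2 / D) * (\<bar>\<delta>'\<bar> / D')"
    using D by (simp add: field_simps power2_eq_square)
  also have "\<dots> \<le> (1 / (2 * \<eta>)) * 1 + 1 * (1 / (2 * \<eta>))"
  proof (intro add_mono mult_mono)
    show "\<bar>\<delta>\<bar> / D \<le> 1 / (2 * \<eta>)" unfolding D_def by (rule aux_half[OF e])
    show "\<eta>\<^sup>2 / D' \<le> 1" unfolding D'_def by (rule aux_le1[OF e])
    show "\<delta>\<^sup>2 / D \<le> 1" unfolding D_def by (rule aux_le1[OF e])
    show "\<bar>\<delta>'\<bar> / D' \<le> 1 / (2 * \<eta>)" unfolding D'_def by (rule aux_half[OF e])
  qed (use D e in auto)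
  also have "\<dots> = 1 / \<eta>" by simp
  finally have q: "\<bar>\<delta>\<bar> * \<bar>(\<eta>\<^sup>2 - \<delta> * \<delta>') / (D * D')\<bar> \<le> 1 / \<eta>" .
  have "\<bar>\<delta>\<bar> * \<bar>rr \<eta> \<delta> - rr \<eta> \<delta>'\<bar> = \<bar>\<delta> - \<delta>'\<bar> * (\<bar>\<delta>\<bar> * \<bar>(\<eta>\<^sup>2 - \<delta> * \<delta>') / (D * D')\<bar>)"
    unfolding eq by (simp add: abs_mult ac_simps)
  also have "\<dots> \<le> \<bar>\<delta> - \<delta>'\<bar> * (1 / \<eta>)" using q by (intro mult_left_mono) auto
  finally show ?thesis by (simp add: ac_simps)
qed

lemma psi_lip:
  assumes e: "0 < \<eta>"
  shows "\<bar>psi \<eta> \<delta> - psi \<eta> \<delta>'\<bar> \<le> (1 / \<eta>) * \<bar>\<delta> - \<delta>'\<bar>"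
proof -
  define D where "D = \<delta>\<^sup>2 + \<eta>\<^sup>2"
  define D' where "D' = \<delta>'\<^sup>2 + \<eta>\<^sup>2"
  have D: "0 < D" "0 < D'" unfolding D_def D'_def using D_pos[OF e] by auto
  have e1: "psi \<eta> \<delta> - psi \<eta> \<delta>' = (\<eta>\<^sup>2 * D' - \<eta>\<^sup>2 * D) / (D * D')"
    unfolding psi_def D_def[symmetric] D'_def[symmetric] using D by (simp add: field_simps)
  have e2: "\<eta>\<^sup>2 * D' - \<eta>\<^sup>2 * D = (\<delta>' - \<delta>) * (\<eta>\<^sup>2 * (\<delta>' + \<delta>))"
    unfolding D_def D'_def by (simp add: algebra_simps power2_eq_square)
  have eq: "psi \<eta> \<delta> - psi \<eta> \<delta>' = (\<delta>' - \<delta>) * (\<eta>\<^sup>2 * (\<delta>' + \<delta>) / (D * D'))"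
    unfolding e1 e2 by simp
  have "\<bar>\<eta>\<^sup>2 * (\<delta>' + \<delta>) / (D * D')\<bar> \<le> \<eta>\<^sup>2 * (\<bar>\<delta>'\<bar> + \<bar>\<delta>\<bar>) / (D * D')"
    using D by (simp add: abs_divide abs_mult divide_right_mono mult_left_mono abs_triangle_ineq)
  also have "\<dots> = (\<eta>\<^sup>2 / D) * (\<bar>\<delta>'\<bar> / D') + (\<bar>\<delta>\<bar> / D) * (\<eta>\<^sup>2 / D')"
    using D by (simp add: field_simps)
  also have "\<dots> \<le> 1 * (1 / (2 * \<eta>)) + (1 / (2 * \<eta>)) * 1"
  proof (intro add_mono mult_mono)
    show "\<bar>\<delta>\<bar> / D \<le> 1 / (2 * \<eta>)" unfolding D_def by (rule aux_half[OF e])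
    show "\<eta>\<^sup>2 / D' \<le> 1" unfolding D'_def by (rule aux_le1[OF e])
    show "\<eta>\<^sup>2 / D \<le> 1" unfolding D_def by (rule aux_le1[OF e])
    show "\<bar>\<delta>'\<bar> / D' \<le> 1 / (2 * \<eta>)" unfolding D'_def by (rule aux_half[OF e])
  qed (use D e in auto)
  also have "\<dots> = 1 / \<eta>" by simp
  finally have q: "\<bar>\<eta>\<^sup>2 * (\<delta>' + \<delta>) / (D * D')\<bar> \<le> 1 / \<eta>" .
  have "\<bar>psi \<eta> \<delta> - psi \<eta> \<delta>'\<bar> = \<bar>\<delta> - \<delta>'\<bar> * \<bar>\<eta>\<^sup>2 * (\<delta>' + \<delta>) / (D * D')\<bar>"
    unfolding eq by (simp add: abs_mult abs_minus_commute)
  also have "\<dots> \<le> \<bar>\<delta> - \<delta>'\<bar> * (1 / \<eta>)" using q by (intro mult_left_mono) auto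
  finally show ?thesis by (simp add: ac_simps)
qed

lemma Phi0_lip:
  assumes e: "0 < \<eta>" and L: "0 \<le> L"
  shows "\<bar>Phi0 L \<eta> F \<delta> - Phi0 L \<eta> F' \<delta>'\<bar> \<le> ((1 + 3 * L) / (2 * \<eta>)) * (\<bar>F - F'\<bar> + \<bar>\<delta> - \<delta>'\<bar>)"
proof -
  let ?c = "clipL L F \<delta>" and ?c' = "clipL L F' \<delta>'" and ?r = "rr \<eta> \<delta>" and ?r' = "rr \<eta> \<delta>'"
  have "\<bar>?c * ?r - ?c' * ?r'\<bar> = \<bar>?r' * (?c - ?c') + ?c * (?r - ?r')\<bar>" by (simp add: algebra_simps)
  also have "\<dots> \<le> \<bar>?r'\<bar> * \<bar>?c - ?c'\<bar> + \<bar>?c\<bar> * \<bar>?r - ?r'\<bar>" by (metis abs_mult abs_triangle_ineq)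
  also have "\<dots> \<le> (1 / (2 * \<eta>)) * (\<bar>F - F'\<bar> + L * \<bar>\<delta> - \<delta>'\<bar>) + L * ((1 / \<eta>) * \<bar>\<delta> - \<delta>'\<bar>)"
  proof (rule add_mono)
    show "\<bar>?r'\<bar> * \<bar>?c - ?c'\<bar> \<le> (1 / (2 * \<eta>)) * (\<bar>F - F'\<bar> + L * \<bar>\<delta> - \<delta>'\<bar>)"
      using rr_bound[OF e] clip_lip[OF L] e by (intro mult_mono) auto
    have "\<bar>?c\<bar> * \<bar>?r - ?r'\<bar> \<le> (L * \<bar>\<delta>\<bar>) * \<bar>?r - ?r'\<bar>"
      using clip_bound[OF L] by (intro mult_right_mono) auto
    also have "\<dots> = L * (\<bar>\<delta>\<bar> * \<bar>?r - ?r'\<bar>)" by simp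
    also have "\<dots> \<le> L * ((1 / \<eta>) * \<bar>\<delta> - \<delta>'\<bar>)" using rr_lip_w[OF e] L by (intro mult_left_mono) auto
    finally show "\<bar>?c\<bar> * \<bar>?r - ?r'\<bar> \<le> L * ((1 / \<eta>) * \<bar>\<delta> - \<delta>'\<bar>)" .
  qed
  also have "\<dots> = (1 / (2 * \<eta>)) * \<bar>F - F'\<bar> + (3 * L / (2 * \<eta>)) * \<bar>\<delta> - \<delta>'\<bar>"
    using e by (simp add: field_simps)
  also have "\<dots> \<le> ((1 + 3 * L) / (2 * \<eta>)) * \<bar>F - F'\<bar> + ((1 + 3 * L) / (2 * \<eta>)) * \<bar>\<delta> - \<delta>'\<bar>"
    using e L by (intro add_mono mult_right_mono divide_right_mono) auto
  finally show ?thesis unfolding Phi0_def by (simp only: distrib_left)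
qed



lemma Gfun_homog:
  assumes k: "0 \<le> k" shows "Gfun sl su (k * x) = k * Gfun sl su x"
proof -
  have m1: "max (k * x) 0 = k * max x 0" using k by (simp add: max_mult_distrib_left)
  have m2: "max (- (k * x)) 0 = k * max (- x) 0" using k by (simp add: max_mult_distrib_left)
  show ?thesis unfolding Gfun_def m1 m2 by (simp add: algebra_simps)
qed

lemma Phi0_bound:
  assumes e: "0 < \<eta>" and L: "0 \<le> L" shows "\<bar>Phi0 L \<eta> F \<delta>\<bar> \<le> L"
proof -
  have "\<bar>Phi0 L \<eta> F \<delta>\<bar> = \<bar>clipL L F \<delta>\<bar> * (\<bar>\<delta>\<bar> / (\<delta>\<^sup>2 + \<eta>\<^sup>2))"
    unfolding Phi0_def rr_def using D_pos[OF e, of \<delta>] by (simp add: abs_mult abs_divide)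
  also have "\<dots> \<le> (L * \<bar>\<delta>\<bar>) * (\<bar>\<delta>\<bar> / (\<delta>\<^sup>2 + \<eta>\<^sup>2))"
    using clip_bound[OF L] D_pos[OF e, of \<delta>] by (intro mult_right_mono) auto
  also have "\<dots> = L * (\<delta>\<^sup>2 / (\<delta>\<^sup>2 + \<eta>\<^sup>2))" by (simp add: power2_eq_square abs_mult_self)
  also have "\<dots> \<le> L * 1" using aux_le1(2)[OF e, of \<delta>] L by (intro mult_left_mono) auto
  finally show ?thesis by simp
qed

lemma psi_bound: "0 < \<eta> \<Longrightarrow> 0 \<le> psi \<eta> \<delta> \<and> psi \<eta> \<delta> \<le> 1"
  unfolding psi_def using aux_le1(1)[of \<eta> \<delta>] D_pos[of \<eta> \<delta>] by simp

lemma err_Phi0: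
  assumes e: "0 < \<eta>" and L: "0 \<le> L" and F: "\<bar>F\<bar> \<le> L * \<bar>\<delta>\<bar>"
  shows "\<bar>F - Phi0 L \<eta> F \<delta> * \<delta>\<bar> \<le> L * \<eta> / 2"
proof -
  define D where "D = \<delta>\<^sup>2 + \<eta>\<^sup>2"
  have D: "0 < D" unfolding D_def using D_pos[OF e] .
  have q1: "F * \<eta>\<^sup>2 / D = F * (D - \<delta>\<^sup>2) / D" by (simp add: D_def)
  also have "\<dots> = F - F * \<delta>\<^sup>2 / D" using D by (simp add: right_diff_distrib diff_divide_distrib)
  finally have q: "F * \<eta>\<^sup>2 / D = F - F * \<delta>\<^sup>2 / D" .
  have "F - Phi0 L \<eta> F \<delta> * \<delta> = F * \<eta>\<^sup>2 / D"
    unfolding q Phi0_def rr_def clip_id[OF F] D_def[symmetric] by (simp add: power2_eq_square)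
  also have "\<bar>\<dots>\<bar> = \<bar>F\<bar> * \<eta>\<^sup>2 / D" using D by (simp add: abs_mult)
  also have "\<dots> \<le> L * \<bar>\<delta>\<bar> * \<eta>\<^sup>2 / D" using F D by (intro divide_right_mono mult_right_mono) auto
  also have "\<dots> = L * \<eta>\<^sup>2 * (\<bar>\<delta>\<bar> / D)" by simp
  also have "\<dots> \<le> L * \<eta>\<^sup>2 * (1 / (2 * \<eta>))" unfolding D_def using aux_half[OF e] L by (intro mult_left_mono) auto
  also have "\<dots> = L * \<eta> / 2" using e by (simp add: power2_eq_square)
  finally show ?thesis .
qed

lemma err_psi:
  assumes e: "0 < \<eta>" shows "\<bar>psi \<eta> \<delta> * \<delta>\<bar> \<le> \<eta> / 2"
proof -
  have "\<bar>psi \<eta> \<delta> * \<delta>\<bar> = \<eta>\<^sup>2 * (\<bar>\<delta>\<bar> / (\<delta>\<^sup>2 + \<eta>\<^sup>2))"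
    unfolding psi_def using D_pos[OF e, of \<delta>] by (simp add: abs_mult)
  also have "\<dots> \<le> \<eta>\<^sup>2 * (1 / (2 * \<eta>))" using aux_half[OF e] by (intro mult_left_mono) auto
  also have "\<dots> = \<eta> / 2" using e by (simp add: power2_eq_square)
  finally show ?thesis .
qed

lemma MG_YZ:
  assumes T: "0 < T" and fam: "\<And>y z. (\<lambda>t w. \<phi> t w y z) \<in> MG sl su 2 T"
    and lip: "\<And>t w y y' z z'. 0 \<le> t \<Longrightarrow> \<bar>\<phi> t w y z - \<phi> t w y' z'\<bar> \<le> L * (\<bar>y - y'\<bar> + \<bar>z - z'\<bar>)"
    and L: "0 \<le> L" and Y: "Y \<in> MG sl su 2 T" and Z: "Z \<in> MG sl su 2 T"
  shows "(\<lambda>t w. \<phi> t w (Y t w) (Z t w)) \<in> MG sl su 2 T"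
proof -
  have s1: "(\<lambda>t w. \<phi> t w y (Z t w)) \<in> MG sl su 2 T" for y
  proof (rule MG_family[OF T _ _ L Z])
    show "(\<lambda>t w. \<phi> t w y z) \<in> MG sl su 2 T" for z by (rule fam)
    show "\<bar>\<phi> t w y z - \<phi> t w y z'\<bar> \<le> L * \<bar>z - z'\<bar>" if "0 \<le> t" for t w z z'
      using lip[OF that, of w y z y z'] by simp
  qed
  show ?thesis
  proof (rule MG_family[OF T _ _ L Y, where \<phi> = "\<lambda>t w y. \<phi> t w y (Z t w)"])
    show "(\<lambda>t w. \<phi> t w y (Z t w)) \<in> MG sl su 2 T" for y by (rule s1)
    show "\<bar>\<phi> t w y (Z t w) - \<phi> t w y' (Z t w)\<bar> \<le> L * \<bar>y - y'\<bar>" if "0 \<le> t" for t w y y'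
      using lip[OF that, of w y "Z t w" y' "Z t w"] by simp
  qed
qed

theorem lemma3p1:
  fixes sl su L1 \<mu> \<epsilon> :: real
    and f g :: "real \<Rightarrow> path \<Rightarrow> real \<Rightarrow> real \<Rightarrow> real"
  assumes sl_pos: "0 < sl" and sl_le: "sl \<le> su"
    and H1: "\<exists>\<beta>>0. \<forall>y z (n::nat). n > 0 \<longrightarrow>
               (\<lambda>t w. f t w y z) \<in> MG sl su (2 + \<beta>) (real n) \<and>
               (\<lambda>t w. g t w y z) \<in> MG sl su (2 + \<beta>) (real n)"
    and H2: "\<And>t w y y' z z'. 0 \<le> t \<Longrightarrow>
               \<bar>f t w y z - f t w y' z'\<bar> + \<bar>g t w y z - g t w y' z'\<bar>
                 \<le> L1 * (\<bar>y - y'\<bar> + \<bar>z - z'\<bar>)"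
    and mu_pos: "0 < \<mu>"
    and H3: "\<And>t w y y' z. 0 \<le> t \<Longrightarrow>
               (f t w y z - f t w y' z) * (y - y')
                 + 2 * Gfun sl su ((g t w y z - g t w y' z) * (y - y'))
                 \<le> - \<mu> * \<bar>y - y'\<bar>\<^sup>2"
    and eps_pos: "0 < \<epsilon>"
  shows "\<exists>a b c d :: real \<Rightarrow> path \<Rightarrow> real \<Rightarrow> real \<Rightarrow> real \<Rightarrow> real.
     (\<exists>C. \<forall>s w u v x. 0 \<le> s \<longrightarrow>
          \<bar>a s w u v x\<bar> \<le> C \<and> \<bar>b s w u v x\<bar> \<le> C \<and> \<bar>c s w u v x\<bar> \<le> C \<and> \<bar>d s w u v x\<bar> \<le> C) \<and>
     (\<forall>s w y y' z z'. 0 \<le> s \<longrightarrow>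
          a s w y y' z + 2 * Gfun sl su (c s w y y' z) \<le> - \<mu> \<and>
          \<bar>f s w y z - f s w y' z' - a s w y y' z * (y - y') - b s w z z' y' * (z - z')\<bar>
            \<le> 4 * L1 * \<epsilon> \<and>
          \<bar>g s w y z - g s w y' z' - c s w y y' z * (y - y') - d s w z z' y' * (z - z')\<bar>
            \<le> 4 * L1 * \<epsilon>) \<and>
     (\<forall>T>0. \<forall>Y\<in>MG sl su 2 T. \<forall>Y'\<in>MG sl su 2 T. \<forall>Z\<in>MG sl su 2 T. \<forall>Z'\<in>MG sl su 2 T.
          (\<lambda>s w. a s w (Y s w) (Y' s w) (Z s w)) \<in> MG sl su 2 T \<and>
          (\<lambda>s w. b s w (Z s w) (Z' s w) (Y' s w)) \<in> MG sl su 2 T \<and>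
          (\<lambda>s w. c s w (Y s w) (Y' s w) (Z s w)) \<in> MG sl su 2 T \<and>
          (\<lambda>s w. d s w (Z s w) (Z' s w) (Y' s w)) \<in> MG sl su 2 T)"
proof -
  have Hf: "\<bar>f t w y z - f t w y' z'\<bar> \<le> L1 * (\<bar>y - y'\<bar> + \<bar>z - z'\<bar>)" if "0 \<le> t" for t w y y' z z'
    using H2[OF that, of w y z y' z'] by linarith
  have Hg: "\<bar>g t w y z - g t w y' z'\<bar> \<le> L1 * (\<bar>y - y'\<bar> + \<bar>z - z'\<bar>)" if "0 \<le> t" for t w y y' z z'
    using H2[OF that, of w y z y' z'] by linarith
  have L0: "0 \<le> L1" using Hf[of 0 undefined 1 0 0 0] by simp
  have L1pos: "0 < L1"
  proof (rule ccontr)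
    assume "\<not> 0 < L1"
    then have L: "L1 = 0" using L0 by simp
    have "f 0 undefined 1 0 = f 0 undefined 0 0" using Hf[of 0 undefined 1 0 0 0] L by simp
    moreover have "g 0 undefined 1 0 = g 0 undefined 0 0" using Hg[of 0 undefined 1 0 0 0] L by simp
    ultimately show False using H3[of 0 undefined 1 0 0] mu_pos by (simp add: Gfun_def)
  qed
  define \<eta> where "\<eta> = 2 * L1 * \<epsilon> / (2 * L1 + \<mu>)"
  have e0: "0 < \<eta>" unfolding \<eta>_def using L1pos mu_pos eps_pos by simp
  have e_eq: "(2 * L1 + \<mu>) * \<eta> = 2 * L1 * \<epsilon>" unfolding \<eta>_def using L1pos mu_pos by simp
  have e_le: "\<eta> \<le> \<epsilon>"
  proof -
    have "(2 * L1 + \<mu>) * \<eta> \<le> (2 * L1 + \<mu>) * \<epsilon>" using e_eq mu_pos eps_pos by simp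
    then show ?thesis using L1pos mu_pos by (simp add: mult_le_cancel_left)
  qed
  define K0 where "K0 = (1 + 3 * L1) / (2 * \<eta>)"
  define Pa where "Pa = (\<lambda>F \<delta>. Phi0 L1 \<eta> F \<delta> - \<mu> * psi \<eta> \<delta>)"
  have Pa_lip: "\<bar>Pa F \<delta> - Pa F' \<delta>'\<bar> \<le> (K0 + \<mu> * (1 / \<eta>)) * (\<bar>F - F'\<bar> + \<bar>\<delta> - \<delta>'\<bar>)" for F \<delta> F' \<delta>'
  proof -
    have "\<bar>Pa F \<delta> - Pa F' \<delta>'\<bar> \<le> \<bar>Phi0 L1 \<eta> F \<delta> - Phi0 L1 \<eta> F' \<delta>'\<bar> + \<mu> * \<bar>psi \<eta> \<delta> - psi \<eta> \<delta>'\<bar>"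
    proof -
      have "Pa F \<delta> - Pa F' \<delta>' = (Phi0 L1 \<eta> F \<delta> - Phi0 L1 \<eta> F' \<delta>') - \<mu> * (psi \<eta> \<delta> - psi \<eta> \<delta>')"
        unfolding Pa_def by (simp add: algebra_simps)
      then show ?thesis using abs_triangle_ineq4[of "Phi0 L1 \<eta> F \<delta> - Phi0 L1 \<eta> F' \<delta>'" "\<mu> * (psi \<eta> \<delta> - psi \<eta> \<delta>')"] mu_pos
        by (simp add: abs_mult)
    qed
    also have "\<dots> \<le> K0 * (\<bar>F - F'\<bar> + \<bar>\<delta> - \<delta>'\<bar>) + \<mu> * ((1 / \<eta>) * (\<bar>F - F'\<bar> + \<bar>\<delta> - \<delta>'\<bar>))"
    proof (intro add_mono mult_left_mono)
      show "\<bar>Phi0 L1 \<eta> F \<delta> - Phi0 L1 \<eta> F' \<delta>'\<bar> \<le> K0 * (\<bar>F - F'\<bar> + \<bar>\<delta> - \<delta>'\<bar>)"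
        unfolding K0_def by (rule Phi0_lip[OF e0 L0])
      have "\<bar>psi \<eta> \<delta> - psi \<eta> \<delta>'\<bar> \<le> (1 / \<eta>) * \<bar>\<delta> - \<delta>'\<bar>" by (rule psi_lip[OF e0])
      also have "\<dots> \<le> (1 / \<eta>) * (\<bar>F - F'\<bar> + \<bar>\<delta> - \<delta>'\<bar>)" using e0 by (intro mult_left_mono) auto
      finally show "\<bar>psi \<eta> \<delta> - psi \<eta> \<delta>'\<bar> \<le> (1 / \<eta>) * (\<bar>F - F'\<bar> + \<bar>\<delta> - \<delta>'\<bar>)" .
    qed (use mu_pos in auto)
    also have "\<dots> = (K0 + \<mu> * (1 / \<eta>)) * (\<bar>F - F'\<bar> + \<bar>\<delta> - \<delta>'\<bar>)" by (simp add: algebra_simps)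
    finally show ?thesis .
  qed
  have P0_lip: "\<bar>Phi0 L1 \<eta> F \<delta> - Phi0 L1 \<eta> F' \<delta>'\<bar> \<le> K0 * (\<bar>F - F'\<bar> + \<bar>\<delta> - \<delta>'\<bar>)" for F \<delta> F' \<delta>'
    unfolding K0_def by (rule Phi0_lip[OF e0 L0])
  define a where "a = (\<lambda>s w y y' z. Pa (f s w y z - f s w y' z) (y - y'))"
  define b where "b = (\<lambda>s w z z' y'. Phi0 L1 \<eta> (f s w y' z - f s w y' z') (z - z'))"
  define c where "c = (\<lambda>s w y y' z. Phi0 L1 \<eta> (g s w y z - g s w y' z) (y - y'))"
  define d where "d = (\<lambda>s w z z' y'. Phi0 L1 \<eta> (g s w y' z - g s w y' z') (z - z'))"
  show ?thesis
  proof (rule exI[of _ a], rule exI[of _ b], rule exI[of _ c], rule exI[of _ d], intro conjI)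
    show "\<exists>C. \<forall>s w u v x. 0 \<le> s \<longrightarrow>
          \<bar>a s w u v x\<bar> \<le> C \<and> \<bar>b s w u v x\<bar> \<le> C \<and> \<bar>c s w u v x\<bar> \<le> C \<and> \<bar>d s w u v x\<bar> \<le> C"
    proof (intro exI[of _ "L1 + \<mu>"] allI impI conjI)
      fix s w u v x
      have "\<bar>Pa F \<delta>\<bar> \<le> L1 + \<mu>" for F \<delta>
      proof -
        have "\<bar>Pa F \<delta>\<bar> \<le> \<bar>Phi0 L1 \<eta> F \<delta>\<bar> + \<mu> * \<bar>psi \<eta> \<delta>\<bar>"
          unfolding Pa_def using abs_triangle_ineq4[of "Phi0 L1 \<eta> F \<delta>" "\<mu> * psi \<eta> \<delta>"] mu_pos
          by (simp add: abs_mult)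
        also have "\<dots> \<le> L1 + \<mu> * 1"
          using Phi0_bound[OF e0 L0] psi_bound[OF e0, of \<delta>] mu_pos by (intro add_mono mult_left_mono) auto
        finally show ?thesis by simp
      qed
      then show "\<bar>a s w u v x\<bar> \<le> L1 + \<mu>" unfolding a_def by simp
      show "\<bar>b s w u v x\<bar> \<le> L1 + \<mu>" unfolding b_def using Phi0_bound[OF e0 L0] mu_pos by (smt (verit))
      show "\<bar>c s w u v x\<bar> \<le> L1 + \<mu>" unfolding c_def using Phi0_bound[OF e0 L0] mu_pos by (smt (verit))
      show "\<bar>d s w u v x\<bar> \<le> L1 + \<mu>" unfolding d_def using Phi0_bound[OF e0 L0] mu_pos by (smt (verit))
    qed
  next
    show "\<forall>s w y y' z z'. 0 \<le> s \<longrightarrow>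
          a s w y y' z + 2 * Gfun sl su (c s w y y' z) \<le> - \<mu> \<and>
          \<bar>f s w y z - f s w y' z' - a s w y y' z * (y - y') - b s w z z' y' * (z - z')\<bar>
            \<le> 4 * L1 * \<epsilon> \<and>
          \<bar>g s w y z - g s w y' z' - c s w y y' z * (y - y') - d s w z z' y' * (z - z')\<bar>
            \<le> 4 * L1 * \<epsilon>"
    proof (intro allI impI conjI)
      fix s y y' z z' :: real and w :: path
      assume s0: "0 \<le> s"
      define \<delta> where "\<delta> = y - y'"
      define \<delta>z where "\<delta>z = z - z'"
      define F1 where "F1 = f s w y z - f s w y' z"
      define G1 where "G1 = g s w y z - g s w y' z"
      define F2 where "F2 = f s w y' z - f s w y' z'"
      define G2 where "G2 = g s w y' z - g s w y' z'"
      have hF1: "\<bar>F1\<bar> \<le> L1 * \<bar>\<delta>\<bar>" unfolding F1_def \<delta>_def using Hf[OF s0, of w y z y' z] by simp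
      have hG1: "\<bar>G1\<bar> \<le> L1 * \<bar>\<delta>\<bar>" unfolding G1_def \<delta>_def using Hg[OF s0, of w y z y' z] by simp
      have hF2: "\<bar>F2\<bar> \<le> L1 * \<bar>\<delta>z\<bar>" unfolding F2_def \<delta>z_def using Hf[OF s0, of w y' z y' z'] by simp
      have hG2: "\<bar>G2\<bar> \<le> L1 * \<bar>\<delta>z\<bar>" unfolding G2_def \<delta>z_def using Hg[OF s0, of w y' z y' z'] by simp
      have aeq: "a s w y y' z = Pa F1 \<delta>" unfolding a_def F1_def \<delta>_def by simp
      have beq: "b s w z z' y' = Phi0 L1 \<eta> F2 \<delta>z" unfolding b_def F2_def \<delta>z_def by simp
      have ceq: "c s w y y' z = Phi0 L1 \<eta> G1 \<delta>" unfolding c_def G1_def \<delta>_def by simp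
      have deq: "d s w z z' y' = Phi0 L1 \<eta> G2 \<delta>z" unfolding d_def G2_def \<delta>z_def by simp
      define D where "D = \<delta>\<^sup>2 + \<eta>\<^sup>2"
      have D: "0 < D" unfolding D_def using D_pos[OF e0] .
      show "a s w y y' z + 2 * Gfun sl su (c s w y y' z) \<le> - \<mu>"
      proof -
        have a1: "a s w y y' z = (F1 * \<delta> - \<mu> * \<eta>\<^sup>2) / D"
          unfolding aeq Pa_def Phi0_def psi_def rr_def clip_id[OF hF1] D_def[symmetric]
          by (simp add: diff_divide_distrib)
        have c1: "c s w y y' z = (1 / D) * (G1 * \<delta>)"
          unfolding ceq Phi0_def rr_def clip_id[OF hG1] D_def[symmetric] by simp
        have g1: "Gfun sl su (c s w y y' z) = (1 / D) * Gfun sl su (G1 * \<delta>)"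
          unfolding c1 using D by (intro Gfun_homog) simp
        have h3: "F1 * \<delta> + 2 * Gfun sl su (G1 * \<delta>) \<le> - \<mu> * \<delta>\<^sup>2"
          using H3[OF s0, of w y z y'] unfolding F1_def G1_def \<delta>_def by simp
        have "a s w y y' z + 2 * Gfun sl su (c s w y y' z) = (F1 * \<delta> + 2 * Gfun sl su (G1 * \<delta>) - \<mu> * \<eta>\<^sup>2) / D"
          unfolding a1 g1 using D by (simp add: field_simps)
        also have "\<dots> \<le> (- \<mu> * \<delta>\<^sup>2 - \<mu> * \<eta>\<^sup>2) / D"
          using h3 D by (intro divide_right_mono) auto
        also have "\<dots> = - \<mu> * D / D" unfolding D_def by (simp add: algebra_simps)
        also have "\<dots> = - \<mu>" using D by simp
        finally show ?thesis .
      qed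
      have eF1: "\<bar>F1 - Pa F1 \<delta> * \<delta>\<bar> \<le> L1 * \<eta> / 2 + \<mu> * (\<eta> / 2)"
      proof -
        have "F1 - Pa F1 \<delta> * \<delta> = (F1 - Phi0 L1 \<eta> F1 \<delta> * \<delta>) + \<mu> * (psi \<eta> \<delta> * \<delta>)"
          unfolding Pa_def by (simp add: algebra_simps)
        also have "\<bar>\<dots>\<bar> \<le> \<bar>F1 - Phi0 L1 \<eta> F1 \<delta> * \<delta>\<bar> + \<mu> * \<bar>psi \<eta> \<delta> * \<delta>\<bar>"
          using abs_triangle_ineq[of "F1 - Phi0 L1 \<eta> F1 \<delta> * \<delta>" "\<mu> * (psi \<eta> \<delta> * \<delta>)"] mu_pos
          by (simp add: abs_mult)
        also have "\<dots> \<le> L1 * \<eta> / 2 + \<mu> * (\<eta> / 2)"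
          using err_Phi0[OF e0 L0 hF1] err_psi[OF e0, of \<delta>] mu_pos by (intro add_mono mult_left_mono) auto
        finally show ?thesis .
      qed
      have eF2: "\<bar>F2 - Phi0 L1 \<eta> F2 \<delta>z * \<delta>z\<bar> \<le> L1 * \<eta> / 2" by (rule err_Phi0[OF e0 L0 hF2])
      have eG1: "\<bar>G1 - Phi0 L1 \<eta> G1 \<delta> * \<delta>\<bar> \<le> L1 * \<eta> / 2" by (rule err_Phi0[OF e0 L0 hG1])
      have eG2: "\<bar>G2 - Phi0 L1 \<eta> G2 \<delta>z * \<delta>z\<bar> \<le> L1 * \<eta> / 2" by (rule err_Phi0[OF e0 L0 hG2])
      have sumf: "f s w y z - f s w y' z' - a s w y y' z * (y - y') - b s w z z' y' * (z - z')
          = (F1 - Pa F1 \<delta> * \<delta>) + (F2 - Phi0 L1 \<eta> F2 \<delta>z * \<delta>z)"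
        unfolding aeq beq F1_def F2_def \<delta>_def \<delta>z_def by simp
      have sumg: "g s w y z - g s w y' z' - c s w y y' z * (y - y') - d s w z z' y' * (z - z')
          = (G1 - Phi0 L1 \<eta> G1 \<delta> * \<delta>) + (G2 - Phi0 L1 \<eta> G2 \<delta>z * \<delta>z)"
        unfolding ceq deq G1_def G2_def \<delta>_def \<delta>z_def by simp
      have "(2 * L1 + \<mu>) * \<eta> \<le> 8 * L1 * \<epsilon>" using e_eq L1pos eps_pos by simp
      then show "\<bar>f s w y z - f s w y' z' - a s w y y' z * (y - y') - b s w z z' y' * (z - z')\<bar> \<le> 4 * L1 * \<epsilon>"
        unfolding sumf using eF1 eF2 abs_triangle_ineq[of "F1 - Pa F1 \<delta> * \<delta>" "F2 - Phi0 L1 \<eta> F2 \<delta>z * \<delta>z"]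
        by (simp add: algebra_simps)
      have "L1 * \<eta> \<le> 4 * L1 * \<epsilon>" using e_le L1pos eps_pos by (simp add: mult_left_mono)
      then show "\<bar>g s w y z - g s w y' z' - c s w y y' z * (y - y') - d s w z z' y' * (z - z')\<bar> \<le> 4 * L1 * \<epsilon>"
        unfolding sumg using eG1 eG2 abs_triangle_ineq[of "G1 - Phi0 L1 \<eta> G1 \<delta> * \<delta>" "G2 - Phi0 L1 \<eta> G2 \<delta>z * \<delta>z"]
        by simp
    qed
  next
    show "\<forall>T>0. \<forall>Y\<in>MG sl su 2 T. \<forall>Y'\<in>MG sl su 2 T. \<forall>Z\<in>MG sl su 2 T. \<forall>Z'\<in>MG sl su 2 T.
          (\<lambda>s w. a s w (Y s w) (Y' s w) (Z s w)) \<in> MG sl su 2 T \<and>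
          (\<lambda>s w. b s w (Z s w) (Z' s w) (Y' s w)) \<in> MG sl su 2 T \<and>
          (\<lambda>s w. c s w (Y s w) (Y' s w) (Z s w)) \<in> MG sl su 2 T \<and>
          (\<lambda>s w. d s w (Z s w) (Z' s w) (Y' s w)) \<in> MG sl su 2 T"
    proof (intro allI impI ballI conjI)
      fix T :: real and Y Y' Z Z' assume T: "0 < T" and Y: "Y \<in> MG sl su 2 T" and Y': "Y' \<in> MG sl su 2 T"
        and Z: "Z \<in> MG sl su 2 T" and Z': "Z' \<in> MG sl su 2 T"
      obtain \<beta> where \<beta>: "0 < \<beta>" "\<forall>y z (n::nat). n > 0 \<longrightarrow>
               (\<lambda>t w. f t w y z) \<in> MG sl su (2 + \<beta>) (real n) \<and>
               (\<lambda>t w. g t w y z) \<in> MG sl su (2 + \<beta>) (real n)" using H1 by blast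
      define n where "n = Suc (nat \<lceil>T\<rceil>)"
      have n: "0 < n" "T \<le> real n" unfolding n_def by (auto, linarith)
      have fM: "(\<lambda>t w. f t w y z) \<in> MG sl su 2 T" for y z
        using MG_restrict[OF T \<beta>(1) n(2)] \<beta>(2) n(1) by blast
      have gM: "(\<lambda>t w. g t w y z) \<in> MG sl su 2 T" for y z
        using MG_restrict[OF T \<beta>(1) n(2)] \<beta>(2) n(1) by blast
      have fYZ: "(\<lambda>t w. f t w (A t w) (B t w)) \<in> MG sl su 2 T"
        if "A \<in> MG sl su 2 T" "B \<in> MG sl su 2 T" for A B
        by (rule MG_YZ[OF T fM Hf L0 that])
      have gYZ: "(\<lambda>t w. g t w (A t w) (B t w)) \<in> MG sl su 2 T"
        if "A \<in> MG sl su 2 T" "B \<in> MG sl su 2 T" for A B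
        by (rule MG_YZ[OF T gM Hg L0 that])
      have dY: "(\<lambda>t w. Y t w - Y' t w) \<in> MG sl su 2 T" by (rule MG_diff[OF T Y Y'])
      have dZ: "(\<lambda>t w. Z t w - Z' t w) \<in> MG sl su 2 T" by (rule MG_diff[OF T Z Z'])
      have F1: "(\<lambda>t w. f t w (Y t w) (Z t w) - f t w (Y' t w) (Z t w)) \<in> MG sl su 2 T"
        by (rule MG_diff[OF T fYZ[OF Y Z] fYZ[OF Y' Z]])
      have F2: "(\<lambda>t w. f t w (Y' t w) (Z t w) - f t w (Y' t w) (Z' t w)) \<in> MG sl su 2 T"
        by (rule MG_diff[OF T fYZ[OF Y' Z] fYZ[OF Y' Z']])
      have G1: "(\<lambda>t w. g t w (Y t w) (Z t w) - g t w (Y' t w) (Z t w)) \<in> MG sl su 2 T"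
        by (rule MG_diff[OF T gYZ[OF Y Z] gYZ[OF Y' Z]])
      have G2: "(\<lambda>t w. g t w (Y' t w) (Z t w) - g t w (Y' t w) (Z' t w)) \<in> MG sl su 2 T"
        by (rule MG_diff[OF T gYZ[OF Y' Z] gYZ[OF Y' Z']])
      show "(\<lambda>s w. a s w (Y s w) (Y' s w) (Z s w)) \<in> MG sl su 2 T"
        unfolding a_def using MG_comp2[OF T Pa_lip F1 dY] by simp
      show "(\<lambda>s w. b s w (Z s w) (Z' s w) (Y' s w)) \<in> MG sl su 2 T"
        unfolding b_def using MG_comp2[OF T P0_lip F2 dZ] by simp
      show "(\<lambda>s w. c s w (Y s w) (Y' s w) (Z s w)) \<in> MG sl su 2 T"
        unfolding c_def using MG_comp2[OF T P0_lip G1 dY] by simp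
      show "(\<lambda>s w. d s w (Z s w) (Z' s w) (Y' s w)) \<in> MG sl su 2 T"
        unfolding d_def using MG_comp2[OF T P0_lip G2 dZ] by simp
    qed
  qed
qed


end
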